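(* (1) Let $(\mathcal A_n,\varphi_n)_{n\in\mathbb N_0}$ with coface operators $\delta^k\colon(\mathcal A_{n-1},\varphi_{n-1})\to(\mathcal A_n,\varphi_n)$ ($k=0,\dots,n$) be an SCO in the category of noncommutative probability spaces. Let $(\mathcal A_\infty,\varphi_\infty)$ be the inductive limit of the filtration $\mathcal A_0\xrightarrow{\delta^1}\mathcal A_1\xrightarrow{\delta^2}\mathcal A_2\to\cdots$ with canonical morphisms $\mu_n\colon\mathcal A_n\to\mathcal A_\infty$, and let $\alpha_0\colon\mathcal A_\infty\to\mathcal A_\infty$ be the unique morphism with $\alpha_0\mu_{n-1}=\mu_n\delta^0$ for all $n\in\mathbb N$. Put $\iota_0:=\mu_0\colon\mathcal A_0\to\mathcal A_\infty$ and $\iota_N:=(\alpha_0)^N\iota_0$ for $N\in\mathbb N_0$. Then $(\iota_N)_{N\in\mathbb N_0}$ is spreadable (with respect to $\varphi_\infty$). (2) Let $\mathcal B$ be a unital algebra, $(\mathcal A,\varphi)$ a noncommutative probability space and $\iota_N\colon\mathcal B\to\mathcal A$ ($N\in\mathbb N_0$) unital homomorphisms; let $\mathcal A^f=*_{N=0}^\infty\mathcal B$ with canonical embeddings $\lambda_N$, $\pi\colon\mathcal A^f\to\mathcal A$ the unital homomorphism with $\pi\lambda_N=\iota_N$, and $\varphi^f:=\varphi\circ\pi$. Consider: (a) $(\iota_N)_{N\in\mathbb N_0}$ is spreadable. (b) Let $\mathcal A^f_n$ be the unital subalgebra generated by $\lambda_0(\mathcal B),\dots,\lambda_n(\mathcal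 B)$ and $\varphi^f_n$ the restriction of $\varphi^f$ to it. For $n\in\mathbb N$, $0\le k\le n$, the unital homomorphisms $\delta^k\colon\mathcal A^f_{n-1}\to\mathcal A^f_n$ determined by $\delta^k(\lambda_N(b))=\lambda_N(b)$ if $N<k$ and $\delta^k(\lambda_N(b))=\lambda_{N+1}(b)$ if $N\ge k$ ($b\in\mathcal B$, $0\le N\le n-1$) satisfy $\varphi^f_n\circ\delta^k=\varphi^f_{n-1}$, so that $(\mathcal A^f_n,\varphi^f_n)_{n\in\mathbb N_0}$ with these coface operators is an SCO in the category of noncommutative probability spaces. (c) Let $\mathcal A_n$ be the unital subalgebra of $\mathcal A$ generated by $\iota_0(\mathcal B),\dots,\iota_n(\mathcal B)$ and $\varphi_n$ the restriction of $\varphi$ to it. For all $n\in\mathbb N$, $0\le k\le n$ there exist unital homomorphisms $\delta^k\colon\mathcal A_{n-1}\to\mathcal A_n$ with $\delta^k(\iota_N(b))=\iota_N(b)$ if $N<k$ and $\delta^k(\iota_N(b))=\iota_{N+1}(b)$ if $N\ge k$ ($b\in\mathcal B$), satisfying $\varphi_n\circ\delta^k=\varphi_{n-1}$, such that $(\mathcal A_n,\varphi_n)_{n\in\mathbb N_0}$ with these coface operators is an SCO in the category of noncommutative probability spaces. Then (a) $\Leftrightarrow$ (b), and (c) $\Rightarrow$ (a).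
   Context: The category of noncommutative probability spaces has objects $(\mathcal A,\varphi)$ with $\mathcal A$ a unital associative complex algebra and $\varphi\colon\mathcal A\to\mathbb C$ linear with $\varphi(1)=1$; morphisms $\alpha\colon(\mathcal A,\varphi)\to(\mathcal B,\psi)$ are unital algebra homomorphisms with $\psi\circ\alpha=\varphi$. Inductive limits exist in this category (algebraic direct limit with the induced functional). An SCO in a category is a sequence of objects $F^n$ ($n\in\mathbb N_0$) with morphisms $\delta^k\colon F^{n-1}\to F^n$ ($k=0,\dots,n$) satisfying $\delta^j\delta^i=\delta^i\delta^{j-1}$ for $i<j$. For a sequence of unital homomorphisms $\iota_N\colon\mathcal B\to(\mathcal A,\varphi)$, its distribution is $\varphi^f=\varphi\circ\pi$ on the unital free product $\mathcal A^f=*_{N\ge0}\mathcal B$, where $\pi$ is the unique unital homomorphism with $\pi\circ\lambda_N=\iota_N$; equivalently, the collection of all moments $\varphi(\iota_{N_1}(b_1)\cdots\iota_{N_r}(b_r))$. The sequence is spreadable if for every strictly increasing $i\colon\mathbb N_0\to\mathbb N_0$ the sequence $(\iota_{i(N)})_N$ has the same distribution as $(\iota_N)_N$, i.e. $\varphi(\iota_{N_1}(b_1)\cdots\iota_{N_r}(b_r))=\varphi(\iota_{i(N_1)}(b_1)\cdots\iota_{i(N_r)}(b_r))$ for all $r$, all $N_j\in\mathbb N_0$ (repetitions allowed) and all $b_j\in\mathcal B$. *)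

theory Defs
  imports Complex_Main
begin

record 'a alg =
  alg_carrier :: "'a set"
  alg_add     :: "'a \<Rightarrow> 'a \<Rightarrow> 'a"
  alg_mult    :: "'a \<Rightarrow> 'a \<Rightarrow> 'a"
  alg_smult   :: "complex \<Rightarrow> 'a \<Rightarrow> 'a"
  alg_zero    :: "'a"
  alg_one     :: "'a"

definition unital_algebra :: "'a alg \<Rightarrow> bool" where
  "unital_algebra A \<longleftrightarrow>
     (let C = alg_carrier A; ad = alg_add A; mu = alg_mult A; sm = alg_smult A;
          z = alg_zero A; e = alg_one A in
       z \<in> C \<and> e \<in> C \<and>
       (\<forall>x\<in>C. \<forall>y\<in>C. ad x y \<in> C \<and> mu x y \<in> C) \<and>
       (\<forall>c. \<forall>x\<in>C. sm c x \<in> C) \<and>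
       (\<forall>x\<in>C. \<forall>y\<in>C. \<forall>w\<in>C. ad (ad x y) w = ad x (ad y w)) \<and>
       (\<forall>x\<in>C. \<forall>y\<in>C. ad x y = ad y x) \<and>
       (\<forall>x\<in>C. ad z x = x) \<and>
       (\<forall>x\<in>C. ad x (sm (-1) x) = z) \<and>
       (\<forall>c. \<forall>x\<in>C. \<forall>y\<in>C. sm c (ad x y) = ad (sm c x) (sm c y)) \<and>
       (\<forall>c d. \<forall>x\<in>C. sm (c + d) x = ad (sm c x) (sm d x)) \<and>
       (\<forall>c d. \<forall>x\<in>C. sm c (sm d x) = sm (c * d) x) \<and>
       (\<forall>x\<in>C. sm 1 x = x) \<and>
       (\<forall>x\<in>C. \<forall>y\<in>C. \<forall>w\<in>C. mu (mu x y) w = mu x (mu y w)) \<and>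
       (\<forall>x\<in>C. \<forall>y\<in>C. \<forall>w\<in>C. mu x (ad y w) = ad (mu x y) (mu x w)) \<and>
       (\<forall>x\<in>C. \<forall>y\<in>C. \<forall>w\<in>C. mu (ad x y) w = ad (mu x w) (mu y w)) \<and>
       (\<forall>c. \<forall>x\<in>C. \<forall>y\<in>C. sm c (mu x y) = mu (sm c x) y \<and> sm c (mu x y) = mu x (sm c y)) \<and>
       (\<forall>x\<in>C. mu e x = x \<and> mu x e = x))"

definition ncps :: "'a alg \<Rightarrow> ('a \<Rightarrow> complex) \<Rightarrow> bool" where
  "ncps A \<phi> \<longleftrightarrow> unital_algebra A \<and>
     (\<forall>x\<in>alg_carrier A. \<forall>y\<in>alg_carrier A. \<phi> (alg_add A x y) = \<phi> x + \<phi> y) \<and>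
     (\<forall>c. \<forall>x\<in>alg_carrier A. \<phi> (alg_smult A c x) = c * \<phi> x) \<and>
     \<phi> (alg_one A) = 1"

definition unital_hom :: "'a alg \<Rightarrow> 'b alg \<Rightarrow> ('a \<Rightarrow> 'b) \<Rightarrow> bool" where
  "unital_hom A B f \<longleftrightarrow>
     (\<forall>x\<in>alg_carrier A. f x \<in> alg_carrier B) \<and>
     (\<forall>x\<in>alg_carrier A. \<forall>y\<in>alg_carrier A. f (alg_add A x y) = alg_add B (f x) (f y)) \<and>
     (\<forall>c. \<forall>x\<in>alg_carrier A. f (alg_smult A c x) = alg_smult B c (f x)) \<and>
     (\<forall>x\<in>alg_carrier A. \<forall>y\<in>alg_carrier A. f (alg_mult A x y) = alg_mult B (f x) (f y)) \<and>
     f (alg_one A) = alg_one B"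

definition ncps_mor :: "'a alg \<Rightarrow> ('a \<Rightarrow> complex) \<Rightarrow> 'b alg \<Rightarrow> ('b \<Rightarrow> complex) \<Rightarrow> ('a \<Rightarrow> 'b) \<Rightarrow> bool" where
  "ncps_mor A \<phi> B \<psi> f \<longleftrightarrow> ncps A \<phi> \<and> ncps B \<psi> \<and> unital_hom A B f \<and>
     (\<forall>x\<in>alg_carrier A. \<psi> (f x) = \<phi> x)"

text \<open>\<open>\<delta> n k\<close> is the coface operator \<open>\<delta>\<^sup>k : F\<^sup>n\<^sup>-\<^sup>1 \<rightarrow> F\<^sup>n\<close> (for \<open>n \<ge> 1\<close>, \<open>k \<le> n\<close>);
  equality of morphisms is equality on the carrier of the domain.\<close>
definition sco :: "(nat \<Rightarrow> 'a alg) \<Rightarrow> (nat \<Rightarrow> 'a \<Rightarrow> complex) \<Rightarrow> (nat \<Rightarrow> nat \<Rightarrow> 'a \<Rightarrow> 'a) \<Rightarrow> bool" where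
  "sco A \<phi> \<delta> \<longleftrightarrow>
     (\<forall>n. ncps (A n) (\<phi> n)) \<and>
     (\<forall>n k. 1 \<le> n \<longrightarrow> k \<le> n \<longrightarrow> ncps_mor (A (n - 1)) (\<phi> (n - 1)) (A n) (\<phi> n) (\<delta> n k)) \<and>
     (\<forall>n i j. 1 \<le> n \<longrightarrow> i < j \<longrightarrow> j \<le> n + 1 \<longrightarrow>
        (\<forall>x\<in>alg_carrier (A (n - 1)). \<delta> (n + 1) j (\<delta> n i x) = \<delta> (n + 1) i (\<delta> n (j - 1) x)))"

fun filt_map :: "(nat \<Rightarrow> nat \<Rightarrow> 'a \<Rightarrow> 'a) \<Rightarrow> nat \<Rightarrow> nat \<Rightarrow> 'a \<Rightarrow> 'a" where
  "filt_map \<delta> m 0 = id"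
| "filt_map \<delta> m (Suc k) = \<delta> (m + Suc k) (m + Suc k) \<circ> filt_map \<delta> m k"

text \<open>\<open>(L,\<psi>)\<close> with canonical morphisms \<open>\<mu> n\<close> is (an isomorphic copy of) the algebraic
  direct limit with the induced functional: compatible cocone of ncps morphisms, jointly
  surjective, and \<open>\<mu> n x = \<mu> n y\<close> only if \<open>x, y\<close> become equal at some later stage.\<close>
definition is_inductive_limit ::
  "(nat \<Rightarrow> 'a alg) \<Rightarrow> (nat \<Rightarrow> 'a \<Rightarrow> complex) \<Rightarrow> (nat \<Rightarrow> nat \<Rightarrow> 'a \<Rightarrow> 'a) \<Rightarrow>
   'c alg \<Rightarrow> ('c \<Rightarrow> complex) \<Rightarrow> (nat \<Rightarrow> 'a \<Rightarrow> 'c) \<Rightarrow> bool" where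
  "is_inductive_limit A \<phi> \<delta> L \<psi> \<mu> \<longleftrightarrow>
     ncps L \<psi> \<and>
     (\<forall>n. ncps_mor (A n) (\<phi> n) L \<psi> (\<mu> n)) \<and>
     (\<forall>n. 1 \<le> n \<longrightarrow> (\<forall>x\<in>alg_carrier (A (n - 1)). \<mu> n (\<delta> n n x) = \<mu> (n - 1) x)) \<and>
     alg_carrier L = (\<Union>n. \<mu> n ` alg_carrier (A n)) \<and>
     (\<forall>n. \<forall>x\<in>alg_carrier (A n). \<forall>y\<in>alg_carrier (A n).
        \<mu> n x = \<mu> n y \<longrightarrow> (\<exists>k. filt_map \<delta> n k x = filt_map \<delta> n k y))"

definition mprod :: "'a alg \<Rightarrow> 'a list \<Rightarrow> 'a" where
  "mprod A xs = foldr (alg_mult A) xs (alg_one A)"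

text \<open>Spreadability of \<open>\<iota>\<^sub>N : B \<rightarrow> (A,\<phi>)\<close>, stated via all mixed moments
  \<open>\<phi>(\<iota>\<^sub>N\<^sub>1(b\<^sub>1)\<cdots>\<iota>\<^sub>N\<^sub>r(b\<^sub>r))\<close> (the words \<open>ws = [(N\<^sub>1,b\<^sub>1),\<dots>,(N\<^sub>r,b\<^sub>r)]\<close>).\<close>
definition spreadable :: "'b alg \<Rightarrow> 'a alg \<Rightarrow> ('a \<Rightarrow> complex) \<Rightarrow> (nat \<Rightarrow> 'b \<Rightarrow> 'a) \<Rightarrow> bool" where
  "spreadable B A \<phi> \<iota> \<longleftrightarrow>
     (\<forall>i :: nat \<Rightarrow> nat. strict_mono i \<longrightarrow>
       (\<forall>ws :: (nat \<times> 'b) list. set (map snd ws) \<subseteq> alg_carrier B \<longrightarrow>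
          \<phi> (mprod A (map (\<lambda>(N, b). \<iota> N b) ws)) =
          \<phi> (mprod A (map (\<lambda>(N, b). \<iota> (i N) b) ws))))"

definition subalg :: "'a alg \<Rightarrow> 'a set \<Rightarrow> bool" where
  "subalg A C \<longleftrightarrow> C \<subseteq> alg_carrier A \<and> alg_zero A \<in> C \<and> alg_one A \<in> C \<and>
     (\<forall>x\<in>C. \<forall>y\<in>C. alg_add A x y \<in> C \<and> alg_mult A x y \<in> C) \<and>
     (\<forall>c. \<forall>x\<in>C. alg_smult A c x \<in> C)"

definition subalg_gen :: "'a alg \<Rightarrow> 'a set \<Rightarrow> 'a set" where
  "subalg_gen A S = \<Inter>{C. subalg A C \<and> S \<subseteq> C}"

definition restr_alg :: "'a alg \<Rightarrow> 'a set \<Rightarrow> 'a alg" where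
  "restr_alg A C = A\<lparr>alg_carrier := C\<rparr>"

definition alg_sub :: "'a alg \<Rightarrow> 'a \<Rightarrow> 'a \<Rightarrow> 'a" where
  "alg_sub A x y = alg_add A x (alg_smult A (-1) y)"

definition alg_ideal :: "'a alg \<Rightarrow> 'a set \<Rightarrow> bool" where
  "alg_ideal A J \<longleftrightarrow> J \<subseteq> alg_carrier A \<and> alg_zero A \<in> J \<and>
     (\<forall>x\<in>J. \<forall>y\<in>J. alg_add A x y \<in> J) \<and> (\<forall>c. \<forall>x\<in>J. alg_smult A c x \<in> J) \<and>
     (\<forall>a\<in>alg_carrier A. \<forall>x\<in>J. alg_mult A a x \<in> J \<and> alg_mult A x a \<in> J)"

definition gen_ideal :: "'a alg \<Rightarrow> 'a set \<Rightarrow> 'a set" where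
  "gen_ideal A R = \<Inter>{J. alg_ideal A J \<and> R \<subseteq> J}"

definition qcls :: "'a alg \<Rightarrow> 'a set \<Rightarrow> 'a \<Rightarrow> 'a set" where
  "qcls A J x = {y \<in> alg_carrier A. alg_sub A y x \<in> J}"

definition qrep :: "'a set \<Rightarrow> 'a" where
  "qrep X = (SOME x. x \<in> X)"

definition quot_alg :: "'a alg \<Rightarrow> 'a set \<Rightarrow> 'a set alg" where
  "quot_alg A J =
     \<lparr>alg_carrier = qcls A J ` alg_carrier A,
      alg_add = (\<lambda>X Y. qcls A J (alg_add A (qrep X) (qrep Y))),
      alg_mult = (\<lambda>X Y. qcls A J (alg_mult A (qrep X) (qrep Y))),
      alg_smult = (\<lambda>c X. qcls A J (alg_smult A c (qrep X))),
      alg_zero = qcls A J (alg_zero A),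
      alg_one = qcls A J (alg_one A)\<rparr>"

text \<open>Free unital algebra on the letters \<open>\<nat> \<times> carrier B\<close>: finitely supported complex
  functions on words, with concatenation product.\<close>
definition word_alg :: "'b set \<Rightarrow> ((nat \<times> 'b) list \<Rightarrow> complex) alg" where
  "word_alg S =
     \<lparr>alg_carrier = {f. finite {w. f w \<noteq> 0} \<and> (\<forall>w. f w \<noteq> 0 \<longrightarrow> set (map snd w) \<subseteq> S)},
      alg_add = (\<lambda>f g w. f w + g w),
      alg_mult = (\<lambda>f g w. \<Sum>i\<le>length w. f (take i w) * g (drop i w)),
      alg_smult = (\<lambda>c f w. c * f w),
      alg_zero = (\<lambda>w. 0),
      alg_one = (\<lambda>w. if w = [] then 1 else 0)\<rparr>"

definition letter :: "nat \<Rightarrow> 'b \<Rightarrow> ((nat \<times> 'b) list \<Rightarrow> complex)" where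
  "letter N b = (\<lambda>w. if w = [(N, b)] then 1 else 0)"

text \<open>Relations making each \<open>b \<mapsto> letter N b\<close> a unital algebra homomorphism.\<close>
definition fp_rels :: "'b alg \<Rightarrow> ((nat \<times> 'b) list \<Rightarrow> complex) set" where
  "fp_rels B =
     (let W = word_alg (alg_carrier B) in
      {alg_sub W (letter N (alg_add B b b')) (alg_add W (letter N b) (letter N b')) | N b b'.
          b \<in> alg_carrier B \<and> b' \<in> alg_carrier B} \<union>
      {alg_sub W (letter N (alg_smult B c b)) (alg_smult W c (letter N b)) | N c b.
          b \<in> alg_carrier B} \<union>
      {alg_sub W (letter N (alg_mult B b b')) (alg_mult W (letter N b) (letter N b')) | N b b'.
          b \<in> alg_carrier B \<and> b' \<in> alg_carrier B} \<union>
      {alg_sub W (letter N (alg_one B)) (alg_one W) | N. True})"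

definition free_prod :: "'b alg \<Rightarrow> ((nat \<times> 'b) list \<Rightarrow> complex) set alg" where
  "free_prod B = quot_alg (word_alg (alg_carrier B)) (gen_ideal (word_alg (alg_carrier B)) (fp_rels B))"

definition fp_emb :: "'b alg \<Rightarrow> nat \<Rightarrow> 'b \<Rightarrow> ((nat \<times> 'b) list \<Rightarrow> complex) set" where
  "fp_emb B N b = qcls (word_alg (alg_carrier B)) (gen_ideal (word_alg (alg_carrier B)) (fp_rels B)) (letter N b)"

end

theory Submission
  imports Defs
begin


locale ua =
  fixes A :: "'a alg"
  assumes ua: "unital_algebra A"
begin

lemmas U = ua[unfolded unital_algebra_def Let_def]

lemma zero_c: "alg_zero A \<in> alg_carrier A"
  using U[THEN conjunct1] by blast

lemma one_c: "alg_one A \<in> alg_carrier A"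
  using U[THEN conjunct2, THEN conjunct1] by blast

lemma add_c: "\<And>x y. x \<in> alg_carrier A \<Longrightarrow> y \<in> alg_carrier A \<Longrightarrow> alg_add A x y \<in> alg_carrier A"
  using U[THEN conjunct2, THEN conjunct2, THEN conjunct1] by blast

lemma mult_c: "\<And>x y. x \<in> alg_carrier A \<Longrightarrow> y \<in> alg_carrier A \<Longrightarrow> alg_mult A x y \<in> alg_carrier A"
  using U[THEN conjunct2, THEN conjunct2, THEN conjunct1] by blast

lemma smult_c: "\<And>c x. x \<in> alg_carrier A \<Longrightarrow> alg_smult A c x \<in> alg_carrier A"
  using U[THEN conjunct2, THEN conjunct2, THEN conjunct2, THEN conjunct1] by blast

lemma add_assoc: "\<And>x y w. x \<in> alg_carrier A \<Longrightarrow> y \<in> alg_carrier A \<Longrightarrow> w \<in> alg_carrier A \<Longrightarrow> alg_add A (alg_add A x y) w = alg_add A x (alg_add A y w)"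
  using U[THEN conjunct2, THEN conjunct2, THEN conjunct2, THEN conjunct2, THEN conjunct1] by blast

lemma add_comm: "\<And>x y. x \<in> alg_carrier A \<Longrightarrow> y \<in> alg_carrier A \<Longrightarrow> alg_add A x y = alg_add A y x"
  using U[THEN conjunct2, THEN conjunct2, THEN conjunct2, THEN conjunct2, THEN conjunct2, THEN conjunct1] by blast

lemma add_zero: "\<And>x. x \<in> alg_carrier A \<Longrightarrow> alg_add A (alg_zero A) x = x"
  using U[THEN conjunct2, THEN conjunct2, THEN conjunct2, THEN conjunct2, THEN conjunct2, THEN conjunct2, THEN conjunct1] by blast

lemma add_neg: "\<And>x. x \<in> alg_carrier A \<Longrightarrow> alg_add A x (alg_smult A (-1) x) = alg_zero A"
  using U[THEN conjunct2, THEN conjunct2, THEN conjunct2, THEN conjunct2, THEN conjunct2, THEN conjunct2, THEN conjunct2, THEN conjunct1] by blast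

lemma smult_add: "\<And>c x y. x \<in> alg_carrier A \<Longrightarrow> y \<in> alg_carrier A \<Longrightarrow> alg_smult A c (alg_add A x y) = alg_add A (alg_smult A c x) (alg_smult A c y)"
  using U[THEN conjunct2, THEN conjunct2, THEN conjunct2, THEN conjunct2, THEN conjunct2, THEN conjunct2, THEN conjunct2, THEN conjunct2, THEN conjunct1] by blast

lemma add_smult: "\<And>c d x. x \<in> alg_carrier A \<Longrightarrow> alg_smult A (c + d) x = alg_add A (alg_smult A c x) (alg_smult A d x)"
  using U[THEN conjunct2, THEN conjunct2, THEN conjunct2, THEN conjunct2, THEN conjunct2, THEN conjunct2, THEN conjunct2, THEN conjunct2, THEN conjunct2, THEN conjunct1] by blast

lemma smult_smult: "\<And>c d x. x \<in> alg_carrier A \<Longrightarrow> alg_smult A c (alg_smult A d x) = alg_smult A (c * d) x"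
  using U[THEN conjunct2, THEN conjunct2, THEN conjunct2, THEN conjunct2, THEN conjunct2, THEN conjunct2, THEN conjunct2, THEN conjunct2, THEN conjunct2, THEN conjunct2, THEN conjunct1] by blast

lemma smult_one: "\<And>x. x \<in> alg_carrier A \<Longrightarrow> alg_smult A 1 x = x"
  using U[THEN conjunct2, THEN conjunct2, THEN conjunct2, THEN conjunct2, THEN conjunct2, THEN conjunct2, THEN conjunct2, THEN conjunct2, THEN conjunct2, THEN conjunct2, THEN conjunct2, THEN conjunct1] by blast

lemma mult_assoc: "\<And>x y w. x \<in> alg_carrier A \<Longrightarrow> y \<in> alg_carrier A \<Longrightarrow> w \<in> alg_carrier A \<Longrightarrow> alg_mult A (alg_mult A x y) w = alg_mult A x (alg_mult A y w)"
  using U[THEN conjunct2, THEN conjunct2, THEN conjunct2, THEN conjunct2, THEN conjunct2, THEN conjunct2, THEN conjunct2, THEN conjunct2, THEN conjunct2, THEN conjunct2, THEN conjunct2, THEN conjunct2, THEN conjunct1] by blast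

lemma distl: "\<And>x y w. x \<in> alg_carrier A \<Longrightarrow> y \<in> alg_carrier A \<Longrightarrow> w \<in> alg_carrier A \<Longrightarrow> alg_mult A x (alg_add A y w) = alg_add A (alg_mult A x y) (alg_mult A x w)"
  using U[THEN conjunct2, THEN conjunct2, THEN conjunct2, THEN conjunct2, THEN conjunct2, THEN conjunct2, THEN conjunct2, THEN conjunct2, THEN conjunct2, THEN conjunct2, THEN conjunct2, THEN conjunct2, THEN conjunct2, THEN conjunct1] by blast

lemma distr: "\<And>x y w. x \<in> alg_carrier A \<Longrightarrow> y \<in> alg_carrier A \<Longrightarrow> w \<in> alg_carrier A \<Longrightarrow> alg_mult A (alg_add A x y) w = alg_add A (alg_mult A x w) (alg_mult A y w)"
  using U[THEN conjunct2, THEN conjunct2, THEN conjunct2, THEN conjunct2, THEN conjunct2, THEN conjunct2, THEN conjunct2, THEN conjunct2, THEN conjunct2, THEN conjunct2, THEN conjunct2, THEN conjunct2, THEN conjunct2, THEN conjunct2, THEN conjunct1] by blast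

lemma smult_multl: "\<And>c x y. x \<in> alg_carrier A \<Longrightarrow> y \<in> alg_carrier A \<Longrightarrow> alg_smult A c (alg_mult A x y) = alg_mult A (alg_smult A c x) y"
  using U[THEN conjunct2, THEN conjunct2, THEN conjunct2, THEN conjunct2, THEN conjunct2, THEN conjunct2, THEN conjunct2, THEN conjunct2, THEN conjunct2, THEN conjunct2, THEN conjunct2, THEN conjunct2, THEN conjunct2, THEN conjunct2, THEN conjunct2, THEN conjunct1] by blast

lemma smult_multr: "\<And>c x y. x \<in> alg_carrier A \<Longrightarrow> y \<in> alg_carrier A \<Longrightarrow> alg_smult A c (alg_mult A x y) = alg_mult A x (alg_smult A c y)"
  using U[THEN conjunct2, THEN conjunct2, THEN conjunct2, THEN conjunct2, THEN conjunct2, THEN conjunct2, THEN conjunct2, THEN conjunct2, THEN conjunct2, THEN conjunct2, THEN conjunct2, THEN conjunct2, THEN conjunct2, THEN conjunct2, THEN conjunct2, THEN conjunct1] by blast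

lemma one_mult: "\<And>x. x \<in> alg_carrier A \<Longrightarrow> alg_mult A (alg_one A) x = x"
  using U[THEN conjunct2, THEN conjunct2, THEN conjunct2, THEN conjunct2, THEN conjunct2, THEN conjunct2, THEN conjunct2, THEN conjunct2, THEN conjunct2, THEN conjunct2, THEN conjunct2, THEN conjunct2, THEN conjunct2, THEN conjunct2, THEN conjunct2, THEN conjunct2] by blast

lemma mult_one: "\<And>x. x \<in> alg_carrier A \<Longrightarrow> alg_mult A x (alg_one A) = x"
  using U[THEN conjunct2, THEN conjunct2, THEN conjunct2, THEN conjunct2, THEN conjunct2, THEN conjunct2, THEN conjunct2, THEN conjunct2, THEN conjunct2, THEN conjunct2, THEN conjunct2, THEN conjunct2, THEN conjunct2, THEN conjunct2, THEN conjunct2, THEN conjunct2] by blast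


lemma add_zero_r: "x \<in> alg_carrier A \<Longrightarrow> alg_add A x (alg_zero A) = x"
  using add_comm add_zero zero_c by metis

lemma smult_0: assumes x: "x \<in> alg_carrier A" shows "alg_smult A 0 x = alg_zero A"
proof -
  let ?y = "alg_smult A 0 x"
  have yc: "?y \<in> alg_carrier A" using smult_c x .
  have yy: "alg_add A ?y ?y = ?y" using add_smult[OF x, of 0 0] by simp
  have "alg_zero A = alg_add A ?y (alg_smult A (-1) ?y)" using add_neg[OF yc] by simp
  also have "\<dots> = alg_add A (alg_add A ?y ?y) (alg_smult A (-1) ?y)" using yy by simp
  also have "\<dots> = alg_add A ?y (alg_add A ?y (alg_smult A (-1) ?y))"
    using add_assoc yc smult_c by blast
  also have "\<dots> = ?y" using add_neg[OF yc] add_zero_r[OF yc] by simp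
  finally show ?thesis by simp
qed

lemma smult_zero: "alg_smult A c (alg_zero A) = alg_zero A"
  using smult_0[OF zero_c] smult_smult[OF zero_c, of c 0] by simp

lemma mult_zero_l: assumes x: "x \<in> alg_carrier A" shows "alg_mult A (alg_zero A) x = alg_zero A"
  using smult_multl[OF zero_c x, of 0] smult_0[OF zero_c] smult_0[OF mult_c[OF zero_c x]] by simp

lemma mult_zero_r: assumes x: "x \<in> alg_carrier A" shows "alg_mult A x (alg_zero A) = alg_zero A"
  using smult_multr[OF x zero_c, of 0] smult_0[OF zero_c] smult_0[OF mult_c[OF x zero_c]] by simp

lemma mprod_c: "set xs \<subseteq> alg_carrier A \<Longrightarrow> mprod A xs \<in> alg_carrier A"
  by (induction xs) (auto simp: mprod_def one_c mult_c)

lemma mprod_append: "set xs \<subseteq> alg_carrier A \<Longrightarrow> set ys \<subseteq> alg_carrier A \<Longrightarrow>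
   mprod A (xs @ ys) = alg_mult A (mprod A xs) (mprod A ys)"
proof (induction xs)
  case Nil then show ?case using one_mult mprod_c by (simp add: mprod_def)
next
  case (Cons a xs)
  then show ?case using mult_assoc[of a "mprod A xs" "mprod A ys"] mprod_c by (simp add: mprod_def)
qed

end

definition lc :: "'a alg \<Rightarrow> ('g \<Rightarrow> 'a) \<Rightarrow> (complex \<times> 'g list) list \<Rightarrow> 'a" where
  "lc A gen cs = foldr (\<lambda>(c, ws) acc. alg_add A (alg_smult A c (mprod A (map gen ws))) acc) cs (alg_zero A)"

lemma lc_Nil[simp]: "lc A gen [] = alg_zero A" by (simp add: lc_def)
lemma lc_Cons[simp]: "lc A gen ((c, ws) # cs) = alg_add A (alg_smult A c (mprod A (map gen ws))) (lc A gen cs)"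
  by (simp add: lc_def)

definition okl :: "('g \<Rightarrow> 'a) \<Rightarrow> 'g set \<Rightarrow> (complex \<times> 'g list) list \<Rightarrow> bool" where
  "okl gen G cs \<longleftrightarrow> (\<forall>p\<in>set cs. set (snd p) \<subseteq> G)"

context ua
begin

lemma word_c: "gen ` G \<subseteq> alg_carrier A \<Longrightarrow> set ws \<subseteq> G \<Longrightarrow> mprod A (map gen ws) \<in> alg_carrier A"
  by (rule mprod_c) auto

lemma lc_c: "gen ` G \<subseteq> alg_carrier A \<Longrightarrow> okl gen G cs \<Longrightarrow> lc A gen cs \<in> alg_carrier A"
  by (induction cs) (auto simp: okl_def zero_c add_c smult_c word_c)

lemma lc_append: "gen ` G \<subseteq> alg_carrier A \<Longrightarrow> okl gen G cs \<Longrightarrow> okl gen G ds \<Longrightarrow>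
    lc A gen (cs @ ds) = alg_add A (lc A gen cs) (lc A gen ds)"
proof (induction cs)
  case Nil then show ?case using add_zero lc_c[OF Nil.prems(1,3)] by simp
next
  case (Cons p cs)
  obtain c ws where p: "p = (c, ws)" by force
  have o: "okl gen G cs" "set ws \<subseteq> G" using Cons.prems p by (auto simp: okl_def)
  show ?case using Cons.IH[OF Cons.prems(1) o(1) Cons.prems(3)] p
    add_assoc[OF smult_c[OF word_c[OF Cons.prems(1) o(2)]] lc_c[OF Cons.prems(1) o(1)] lc_c[OF Cons.prems(1) Cons.prems(3)]]
    by simp
qed

lemma okl_append[simp]: "okl gen G (cs @ ds) \<longleftrightarrow> okl gen G cs \<and> okl gen G ds"
  by (auto simp: okl_def)

lemma lc_smult: "gen ` G \<subseteq> alg_carrier A \<Longrightarrow> okl gen G cs \<Longrightarrow>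
    alg_smult A d (lc A gen cs) = lc A gen (map (\<lambda>(c, ws). (d * c, ws)) cs)"
proof (induction cs)
  case Nil then show ?case using smult_zero by simp
next
  case (Cons p cs)
  obtain c ws where p: "p = (c, ws)" by force
  have o: "okl gen G cs" "set ws \<subseteq> G" using Cons.prems p by (auto simp: okl_def)
  show ?case using Cons.IH[OF Cons.prems(1) o(1)] p
    smult_add[OF smult_c[OF word_c[OF Cons.prems(1) o(2)]] lc_c[OF Cons.prems(1) o(1)]]
    smult_smult[OF word_c[OF Cons.prems(1) o(2)]]
    by simp
qed

lemma okl_map_smult[simp]: "okl gen G (map (\<lambda>(c, ws). (d * c, ws)) cs) = okl gen G cs"
  by (simp add: okl_def case_prod_unfold)

end


context ua
begin

lemma smult_mult_both: "a \<in> alg_carrier A \<Longrightarrow> b \<in> alg_carrier A \<Longrightarrow>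
   alg_mult A (alg_smult A c a) (alg_smult A e b) = alg_smult A (c * e) (alg_mult A a b)"
  using smult_multl[of a "alg_smult A e b" c] smult_multr[of a b e] smult_smult[of "alg_mult A a b" c e]
    smult_c mult_c by simp

lemma okl_step: "okl gen G ds \<Longrightarrow> set w \<subseteq> G \<Longrightarrow> okl gen G (map (\<lambda>(e, v). (c * e, w @ v)) ds)"
  by (auto simp: okl_def case_prod_unfold)

lemma lc_mult_step: assumes g: "gen ` G \<subseteq> alg_carrier A" and w: "set w \<subseteq> G"
  shows "okl gen G ds \<Longrightarrow> alg_mult A (alg_smult A c (mprod A (map gen w))) (lc A gen ds)
      = lc A gen (map (\<lambda>(e, v). (c * e, w @ v)) ds)"
proof (induction ds)
  case Nil then show ?case using mult_zero_r smult_c word_c[OF g w] by simp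
next
  case (Cons p ds)
  obtain e v where p: "p = (e, v)" by force
  have o: "okl gen G ds" "set v \<subseteq> G" using Cons.prems p by (auto simp: okl_def)
  have mw: "mprod A (map gen w) \<in> alg_carrier A" using word_c[OF g w] .
  have mv: "mprod A (map gen v) \<in> alg_carrier A" using word_c[OF g o(2)] .
  have ap: "mprod A (map gen (w @ v)) = alg_mult A (mprod A (map gen w)) (mprod A (map gen v))"
    using mprod_append[of "map gen w" "map gen v"] g w o(2) by auto
  show ?case using Cons.IH[OF o(1)] p distl[OF smult_c[OF mw] smult_c[OF mv] lc_c[OF g o(1)]]
    smult_mult_both[OF mw mv] ap by simp
qed

lemma lc_mult: assumes g: "gen ` G \<subseteq> alg_carrier A"
  shows "okl gen G cs \<Longrightarrow> okl gen G ds \<Longrightarrow> alg_mult A (lc A gen cs) (lc A gen ds)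
      = lc A gen (concat (map (\<lambda>(c, w). map (\<lambda>(e, v). (c * e, w @ v)) ds) cs))
        \<and> okl gen G (concat (map (\<lambda>(c, w). map (\<lambda>(e, v). (c * e, w @ v)) ds) cs))"
proof (induction cs)
  case Nil then show ?case using mult_zero_l lc_c[OF g] by (simp add: okl_def)
next
  case (Cons p cs)
  obtain c w where p: "p = (c, w)" by force
  have o: "okl gen G cs" "set w \<subseteq> G" using Cons.prems p by (auto simp: okl_def)
  have mw: "mprod A (map gen w) \<in> alg_carrier A" using word_c[OF g o(2)] .
  note IH = Cons.IH[OF o(1) Cons.prems(2)]
  have st: "okl gen G (map (\<lambda>(e, v). (c * e, w @ v)) ds)" using okl_step[OF Cons.prems(2) o(2)] .
  show ?case using IH p distr[OF smult_c[OF mw] lc_c[OF g o(1)] lc_c[OF g Cons.prems(2)]]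
    lc_mult_step[OF g o(2) Cons.prems(2)] lc_append[OF g st IH[THEN conjunct2]] st by simp
qed

definition spanS :: "('g \<Rightarrow> 'a) \<Rightarrow> 'g set \<Rightarrow> 'a set" where
  "spanS gen G = {lc A gen cs | cs. okl gen G cs}"

lemma spanS_subalg: assumes g: "gen ` G \<subseteq> alg_carrier A"
  shows "subalg A (spanS gen G)"
  unfolding subalg_def
proof (intro conjI ballI allI)
  show "spanS gen G \<subseteq> alg_carrier A" using lc_c[OF g] by (auto simp: spanS_def)
  show "alg_zero A \<in> spanS gen G" unfolding spanS_def
    by (rule CollectI, rule exI[of _ "[]"]) (simp add: okl_def)
  show "alg_one A \<in> spanS gen G" unfolding spanS_def
    by (rule CollectI, rule exI[of _ "[(1, [])]"])
       (simp add: okl_def mprod_def smult_one[OF one_c] add_zero_r[OF one_c])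
  fix x y assume x: "x \<in> spanS gen G" and y: "y \<in> spanS gen G"
  then obtain cs ds where c: "x = lc A gen cs" "okl gen G cs" and d: "y = lc A gen ds" "okl gen G ds"
    by (auto simp: spanS_def)
  show "alg_add A x y \<in> spanS gen G" unfolding spanS_def
    using lc_append[OF g c(2) d(2)] c d by (intro CollectI exI[of _ "cs @ ds"]) simp
  show "alg_mult A x y \<in> spanS gen G" unfolding spanS_def
    using lc_mult[OF g c(2) d(2)] c d by blast
next
  fix c x assume x: "x \<in> spanS gen G"
  then obtain cs where c: "x = lc A gen cs" "okl gen G cs" by (auto simp: spanS_def)
  show "alg_smult A c x \<in> spanS gen G" unfolding spanS_def
    using lc_smult[OF g c(2), of c] c okl_map_smult by blast
qed

lemma gen_in_spanS: assumes g: "gen ` G \<subseteq> alg_carrier A" and a: "a \<in> G"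
  shows "gen a \<in> spanS gen G"
proof -
  have ga: "gen a \<in> alg_carrier A" using g a by auto
  have "lc A gen [(1, [a])] = gen a"
    by (simp add: mprod_def mult_one[OF ga] smult_one[OF ga] add_zero_r[OF ga])
  then show ?thesis unfolding spanS_def using a by (intro CollectI exI[of _ "[(1, [a])]"]) (auto simp: okl_def)
qed

end

lemma subalg_gen_sub: "subalg A C \<Longrightarrow> S \<subseteq> C \<Longrightarrow> subalg_gen A S \<subseteq> C"
  unfolding subalg_gen_def by blast

lemma subalg_gen_base: "S \<subseteq> subalg_gen A S"
  unfolding subalg_gen_def by blast

lemma subalg_Inter: "\<C> \<noteq> {} \<Longrightarrow> (\<And>C. C \<in> \<C> \<Longrightarrow> subalg A C) \<Longrightarrow> subalg A (\<Inter>\<C>)"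
  unfolding subalg_def by (intro conjI; blast)

lemma subalg_gen_subalg: "subalg A (alg_carrier A) \<Longrightarrow> S \<subseteq> alg_carrier A \<Longrightarrow> subalg A (subalg_gen A S)"
  unfolding subalg_gen_def by (rule subalg_Inter) auto

lemma (in ua) subalg_carrier: "subalg A (alg_carrier A)"
  unfolding subalg_def using zero_c one_c add_c mult_c smult_c by blast

lemma (in ua) subalg_gen_in_span: "gen ` G \<subseteq> alg_carrier A \<Longrightarrow> subalg_gen A (gen ` G) \<subseteq> spanS gen G"
  by (rule subalg_gen_sub[OF spanS_subalg]) (auto intro: gen_in_spanS)

lemma (in ua) ua_restr: assumes "subalg A C" shows "unital_algebra (restr_alg A C)"
proof -
  have s: "C \<subseteq> alg_carrier A" using assms by (simp add: subalg_def)
  show ?thesis unfolding unital_algebra_def Let_def restr_alg_def using assms s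
    apply simp
    apply (intro conjI)
    apply (simp_all add: subalg_def)
    using add_assoc add_comm add_zero add_neg smult_add add_smult smult_smult smult_one mult_assoc distl distr
      smult_multl smult_multr one_mult mult_one by (meson subsetD)+
qed

lemma ua_restr_iff: "alg_carrier (restr_alg A C) = C" "alg_add (restr_alg A C) = alg_add A"
  "alg_mult (restr_alg A C) = alg_mult A" "alg_smult (restr_alg A C) = alg_smult A"
  "alg_zero (restr_alg A C) = alg_zero A" "alg_one (restr_alg A C) = alg_one A"
  by (simp_all add: restr_alg_def)

lemma mprod_restr[simp]: "mprod (restr_alg A C) xs = mprod A xs"
  by (simp add: mprod_def restr_alg_def)


lemma uhom_comp: "unital_hom X Y f \<Longrightarrow> unital_hom Y Z g \<Longrightarrow> unital_hom X Z (g \<circ> f)"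
  unfolding unital_hom_def by auto

lemma uhom_id: "unital_hom X X id"
  unfolding unital_hom_def by auto

lemma hom_mprod: assumes h: "unital_hom X Y f" and X: "unital_algebra X"
  shows "set xs \<subseteq> alg_carrier X \<Longrightarrow> f (mprod X xs) = mprod Y (map f xs)"
proof (induction xs)
  case Nil then show ?case using h by (simp add: mprod_def unital_hom_def)
next
  case (Cons a xs)
  have "mprod X xs \<in> alg_carrier X" using ua.mprod_c[OF ua.intro[OF X]] Cons.prems by simp
  then show ?case using Cons h by (simp add: mprod_def unital_hom_def)
qed

lemma hom_zero: assumes h: "unital_hom X Y f" and X: "unital_algebra X" and Y: "unital_algebra Y"
  shows "f (alg_zero X) = alg_zero Y"
proof -
  have "f (alg_zero X) = f (alg_smult X 0 (alg_zero X))" using ua.smult_0[OF ua.intro[OF X] ua.zero_c[OF ua.intro[OF X]]] by simp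
  also have "\<dots> = alg_smult Y 0 (f (alg_zero X))" using h ua.zero_c[OF ua.intro[OF X]] by (simp add: unital_hom_def)
  also have "\<dots> = alg_zero Y" using ua.smult_0[OF ua.intro[OF Y]] h ua.zero_c[OF ua.intro[OF X]] by (simp add: unital_hom_def)
  finally show ?thesis .
qed

lemma hom_lc: assumes h: "unital_hom X Y f" and X: "unital_algebra X" and Y: "unital_algebra Y"
  and g: "gen ` G \<subseteq> alg_carrier X"
  shows "okl gen G cs \<Longrightarrow> f (lc X gen cs) = lc Y (f \<circ> gen) cs"
proof (induction cs)
  case Nil then show ?case using hom_zero[OF h X Y] by simp
next
  case (Cons p cs)
  obtain c w where p: "p = (c, w)" by force
  have o: "okl gen G cs" "set w \<subseteq> G" using Cons.prems p by (auto simp: okl_def)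
  have mw: "mprod X (map gen w) \<in> alg_carrier X" using ua.word_c[OF ua.intro[OF X] g o(2)] .
  have l: "lc X gen cs \<in> alg_carrier X" using ua.lc_c[OF ua.intro[OF X] g o(1)] .
  have m: "f (mprod X (map gen w)) = mprod Y (map (f \<circ> gen) w)"
    using hom_mprod[OF h X, of "map gen w"] g o(2) by auto
  show ?case using Cons.IH[OF o(1)] p h mw l m ua.smult_c[OF ua.intro[OF X] mw] by (simp add: unital_hom_def comp_def)
qed

lemma lin_lc: assumes X: "unital_algebra X" and g: "gen ` G \<subseteq> alg_carrier X"
  and add: "\<forall>x\<in>alg_carrier X. \<forall>y\<in>alg_carrier X. \<Phi> (alg_add X x y) = \<Phi> x + \<Phi> y"
  and sm: "\<forall>c. \<forall>x\<in>alg_carrier X. \<Phi> (alg_smult X c x) = c * \<Phi> x"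
  shows "okl gen G cs \<Longrightarrow> \<Phi> (lc X gen cs) = sum_list (map (\<lambda>(c, w). c * \<Phi> (mprod X (map gen w))) cs)"
proof (induction cs)
  case Nil
  have "\<Phi> (alg_zero X) = \<Phi> (alg_smult X 0 (alg_zero X))" using ua.smult_0[OF ua.intro[OF X] ua.zero_c[OF ua.intro[OF X]]] by simp
  also have "\<dots> = 0" using sm ua.zero_c[OF ua.intro[OF X]] by simp
  finally show ?case by simp
next
  case (Cons p cs)
  obtain c w where p: "p = (c, w)" by force
  have o: "okl gen G cs" "set w \<subseteq> G" using Cons.prems p by (auto simp: okl_def)
  have mw: "mprod X (map gen w) \<in> alg_carrier X" using ua.word_c[OF ua.intro[OF X] g o(2)] .
  have l: "lc X gen cs \<in> alg_carrier X" using ua.lc_c[OF ua.intro[OF X] g o(1)] .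
  show ?case using Cons.IH[OF o(1)] p add sm mw l ua.smult_c[OF ua.intro[OF X] mw] by simp
qed

lemma ge_self: assumes "\<forall>a b. a < b \<longrightarrow> b \<le> n \<longrightarrow> f a < (f b :: nat)"
  shows "N \<le> n \<Longrightarrow> N \<le> f N"
proof (induction N)
  case 0 then show ?case by simp
next
  case (Suc N)
  then have "f N < f (Suc N)" using assms by auto
  then show ?case using Suc by simp
qed

lemma spread_gen:
  fixes C :: "nat \<Rightarrow> 'a alg" and \<psi> :: "nat \<Rightarrow> 'a \<Rightarrow> complex" and d :: "nat \<Rightarrow> nat \<Rightarrow> 'a \<Rightarrow> 'a"
    and g :: "nat \<Rightarrow> nat \<Rightarrow> 'b \<Rightarrow> 'a"
  assumes mor: "\<And>n k. 1 \<le> n \<Longrightarrow> k \<le> n \<Longrightarrow> ncps_mor (C (n-1)) (\<psi> (n-1)) (C n) (\<psi> n) (d n k)"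
    and gd: "\<And>n k N b. 1 \<le> n \<Longrightarrow> k \<le> n \<Longrightarrow> N \<le> n-1 \<Longrightarrow> b \<in> S \<Longrightarrow>
        d n k (g (n-1) N b) = g n (if N < k then N else N+1) b"
  shows "\<And>f. (\<forall>N\<le>n. f N \<le> m) \<Longrightarrow> (\<forall>a b. a < b \<longrightarrow> b \<le> n \<longrightarrow> f a < f b) \<Longrightarrow>
    \<exists>\<theta>. unital_hom (C n) (C m) \<theta> \<and> (\<forall>x\<in>alg_carrier (C n). \<psi> m (\<theta> x) = \<psi> n x) \<and>
       (\<forall>N b. N \<le> n \<longrightarrow> b \<in> S \<longrightarrow> \<theta> (g n N b) = g m (f N) b)"
proof (induction m rule: less_induct)
  case (less m f)
  note fb = less.prems(1) and fs = less.prems(2)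
  have fge: "\<And>N. N \<le> n \<Longrightarrow> N \<le> f N" using ge_self[OF fs] .
  have fmono: "\<And>a b. a \<le> b \<Longrightarrow> b \<le> n \<Longrightarrow> f a \<le> f b" using fs by (metis le_eq_less_or_eq)
  show ?case
  proof (cases "f n < m")
    case True
    then have m1: "1 \<le> m" by simp
    have fb': "\<forall>N\<le>n. f N \<le> m - 1" using fmono True by (metis diff_Suc_1 le_simps(2) le_trans less_imp_Suc_add nat_le_linear)
    obtain \<theta> where th: "unital_hom (C n) (C (m-1)) \<theta>" "\<forall>x\<in>alg_carrier (C n). \<psi> (m-1) (\<theta> x) = \<psi> n x"
      "\<forall>N b. N \<le> n \<longrightarrow> b \<in> S \<longrightarrow> \<theta> (g n N b) = g (m-1) (f N) b"
      using less.IH[of "m-1" f] m1 fb' fs by auto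
    have M: "ncps_mor (C (m-1)) (\<psi> (m-1)) (C m) (\<psi> m) (d m m)" using mor[OF m1] by simp
    show ?thesis
    proof (intro exI[of _ "d m m \<circ> \<theta>"] conjI allI impI ballI)
      show "unital_hom (C n) (C m) (d m m \<circ> \<theta>)" using uhom_comp[OF th(1)] M unfolding ncps_mor_def by blast
      fix x assume "x \<in> alg_carrier (C n)"
      then show "\<psi> m ((d m m \<circ> \<theta>) x) = \<psi> n x" using th M by (simp add: ncps_mor_def unital_hom_def)
    next
      fix N b assume "N \<le> n" "b \<in> S"
      then show "(d m m \<circ> \<theta>) (g n N b) = g m (f N) b"
        using th(3) gd[OF m1 order_refl, of "f N" b] fb' True fmono by (auto simp: less_Suc_eq_le)
    qed
  next
    case False
    then have fn: "f n = m" using fb by (simp add: le_antisym)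
    show ?thesis
    proof (cases "\<forall>N\<le>n. f N = N")
      case True
      then have "m = n" using fn by simp
      then show ?thesis using True uhom_id[unfolded id_def] by (intro exI[of _ id]) auto
    next
      case False
      define k where "k = (LEAST N. N \<le> n \<and> f N \<noteq> N)"
      have k: "k \<le> n" "f k \<noteq> k" using LeastI_ex[of "\<lambda>N. N \<le> n \<and> f N \<noteq> N"] False unfolding k_def by auto
      have kl: "\<And>N. N < k \<Longrightarrow> f N = N" using not_less_Least[of _ "\<lambda>N. N \<le> n \<and> f N \<noteq> N"] k
        unfolding k_def by (metis less_imp_le_nat order_trans k_def)
      have fk: "k < f k" using fge[OF k(1)] k(2) by simp
      have fkm: "f k \<le> m" using fb k by simp
      have m1: "1 \<le> m" using fk fkm by simp
      define f' where "f' N = (if N < k then N else f N - 1)" for N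
      have fb': "\<forall>N\<le>n. f' N \<le> m - 1" unfolding f'_def using fb fk fkm by auto
      have fs': "\<forall>a b. a < b \<longrightarrow> b \<le> n \<longrightarrow> f' a < f' b"
      proof (intro allI impI)
        fix a b assume ab: "a < b" "b \<le> n"
        show "f' a < f' b"
        proof (cases "b < k")
          case True then show ?thesis using ab unfolding f'_def by simp
        next
          case bk: False
          have "f k \<le> f b" using fmono bk ab by simp
          moreover have "f a < f b" using fs ab by simp
          moreover have "\<not> a < k \<Longrightarrow> f k \<le> f a" using fmono ab by simp
          ultimately show ?thesis using fk bk unfolding f'_def
            by (cases "a < k") auto
        qed
      qed
      obtain \<theta> where th: "unital_hom (C n) (C (m-1)) \<theta>" "\<forall>x\<in>alg_carrier (C n). \<psi> (m-1) (\<theta> x) = \<psi> n x"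
        "\<forall>N b. N \<le> n \<longrightarrow> b \<in> S \<longrightarrow> \<theta> (g n N b) = g (m-1) (f' N) b"
        using less.IH[of "m-1" f'] m1 fb' fs' by auto
      have km: "k \<le> m" using fk fkm by simp
      have M: "ncps_mor (C (m-1)) (\<psi> (m-1)) (C m) (\<psi> m) (d m k)" using mor[OF m1 km] by simp
      show ?thesis
      proof (intro exI[of _ "d m k \<circ> \<theta>"] conjI allI impI ballI)
        show "unital_hom (C n) (C m) (d m k \<circ> \<theta>)" using uhom_comp[OF th(1)] M unfolding ncps_mor_def by blast
        fix x assume "x \<in> alg_carrier (C n)"
        then show "\<psi> m ((d m k \<circ> \<theta>) x) = \<psi> n x" using th M by (simp add: ncps_mor_def unital_hom_def)
      next
        fix N b assume N: "N \<le> n" and b: "b \<in> S"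
        have e: "(if f' N < k then f' N else f' N + 1) = f N"
        proof (cases "N < k")
          case True then show ?thesis using kl unfolding f'_def by simp
        next
          case False
          then have "f k \<le> f N" using fmono N by simp
          then show ?thesis using fk False unfolding f'_def by auto
        qed
        show "(d m k \<circ> \<theta>) (g n N b) = g m (f N) b"
          using th(3) N b gd[OF m1 km, of "f' N" b] fb' e by auto
      qed
    qed
  qed
qed


lemma spread_final:
  fixes C :: "nat \<Rightarrow> 'a alg" and \<psi> :: "nat \<Rightarrow> 'a \<Rightarrow> complex" and d :: "nat \<Rightarrow> nat \<Rightarrow> 'a \<Rightarrow> 'a"
    and g :: "nat \<Rightarrow> nat \<Rightarrow> 'b \<Rightarrow> 'a" and \<iota> :: "nat \<Rightarrow> 'b \<Rightarrow> 'x"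
  assumes mor: "\<And>n k. 1 \<le> n \<Longrightarrow> k \<le> n \<Longrightarrow> ncps_mor (C (n-1)) (\<psi> (n-1)) (C n) (\<psi> n) (d n k)"
    and gd: "\<And>n k N b. 1 \<le> n \<Longrightarrow> k \<le> n \<Longrightarrow> N \<le> n-1 \<Longrightarrow> b \<in> S \<Longrightarrow>
        d n k (g (n-1) N b) = g n (if N < k then N else N+1) b"
    and gc: "\<And>n N b. N \<le> n \<Longrightarrow> b \<in> S \<Longrightarrow> g n N b \<in> alg_carrier (C n)"
    and amb: "\<And>n ws. set (map snd ws) \<subseteq> S \<Longrightarrow> (\<forall>p\<in>set ws. fst p \<le> n) \<Longrightarrow>
        \<Phi> (map (\<lambda>(N, b). \<iota> N b) ws) = \<psi> n (mprod (C n) (map (\<lambda>(N, b). g n N b) ws))"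
    and i: "strict_mono i" and ws: "set (map snd ws) \<subseteq> S"
  shows "\<Phi> (map (\<lambda>(N, b). \<iota> N b) ws) = \<Phi> (map (\<lambda>(N, b). \<iota> (i N) b) ws)"
proof -
  define n where "n = sum_list (map fst ws)"
  have wn: "\<forall>p\<in>set ws. fst p \<le> n" unfolding n_def by (auto intro!: member_le_sum_list simp: image_iff) force
  define m where "m = i n"
  have f1: "\<forall>N\<le>n. i N \<le> m" unfolding m_def using i by (simp add: strict_mono_less_eq)
  have f2: "\<forall>a b. a < b \<longrightarrow> b \<le> n \<longrightarrow> i a < i b" using i by (simp add: strict_mono_def)
  obtain \<theta> where th: "unital_hom (C n) (C m) \<theta>" "\<forall>x\<in>alg_carrier (C n). \<psi> m (\<theta> x) = \<psi> n x"
       "\<forall>N b. N \<le> n \<longrightarrow> b \<in> S \<longrightarrow> \<theta> (g n N b) = g m (i N) b"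
    using spread_gen[where C=C and \<psi>=\<psi> and d=d and g=g and S=S and n=n and m=m and f=i, OF mor gd f1 f2] by blast
  have uaC: "unital_algebra (C n)"
  proof (cases n)
    case 0 then show ?thesis using mor[of 1 0] by (simp add: ncps_mor_def ncps_def)
  next
    case (Suc n') then show ?thesis using mor[of n 0] by (simp add: ncps_mor_def ncps_def)
  qed
  let ?xs = "map (\<lambda>(N, b). g n N b) ws"
  have xs: "set ?xs \<subseteq> alg_carrier (C n)" using gc wn ws by (force simp: image_iff)
  have "\<theta> (mprod (C n) ?xs) = mprod (C m) (map \<theta> ?xs)" using hom_mprod[OF th(1) uaC xs] .
  also have "map \<theta> ?xs = map (\<lambda>(N, b). g m N b) (map (\<lambda>(N, b). (i N, b)) ws)"
    using th(3) wn ws by (force simp: image_iff)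
  finally have e: "\<theta> (mprod (C n) ?xs) = mprod (C m) (map (\<lambda>(N, b). g m N b) (map (\<lambda>(N, b). (i N, b)) ws))" .
  have ws': "set (map snd (map (\<lambda>(N, b). (i N, b)) ws)) \<subseteq> S" using ws by auto
  have wm: "\<forall>p\<in>set (map (\<lambda>(N, b). (i N, b)) ws). fst p \<le> m" using wn f1 by auto
  have "\<Phi> (map (\<lambda>(N, b). \<iota> N b) ws) = \<psi> n (mprod (C n) ?xs)" using amb[OF ws wn] .
  also have "\<dots> = \<psi> m (\<theta> (mprod (C n) ?xs))" using th(2) ua.mprod_c[OF ua.intro[OF uaC] xs] by simp
  also have "\<dots> = \<Phi> (map (\<lambda>(N, b). \<iota> N b) (map (\<lambda>(N, b). (i N, b)) ws))" using e amb[OF ws' wm] by simp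
  also have "map (\<lambda>(N, b). \<iota> N b) (map (\<lambda>(N, b). (i N, b)) ws) = map (\<lambda>(N, b). \<iota> (i N) b) ws" by auto
  finally show ?thesis .
qed


fun Dz :: "(nat \<Rightarrow> nat \<Rightarrow> 'a \<Rightarrow> 'a) \<Rightarrow> nat \<Rightarrow> 'a \<Rightarrow> 'a" where
  "Dz \<delta> 0 b = b"
| "Dz \<delta> (Suc N) b = \<delta> (Suc N) 0 (Dz \<delta> N b)"

definition hh :: "(nat \<Rightarrow> nat \<Rightarrow> 'a \<Rightarrow> 'a) \<Rightarrow> nat \<Rightarrow> nat \<Rightarrow> 'a \<Rightarrow> 'a" where
  "hh \<delta> n N b = filt_map \<delta> N (n - N) (Dz \<delta> N b)"

locale part1 =
  fixes A :: "nat \<Rightarrow> 'a alg" and \<phi> \<delta> and L :: "'c alg" and \<psi> \<mu> \<alpha>0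
  assumes sco: "sco A \<phi> \<delta>"
    and lim: "is_inductive_limit A \<phi> \<delta> L \<psi> \<mu>"
    and al: "ncps_mor L \<psi> L \<psi> \<alpha>0"
    and rel: "\<forall>n. 1 \<le> n \<longrightarrow> (\<forall>x\<in>alg_carrier (A (n - 1)). \<alpha>0 (\<mu> (n - 1) x) = \<mu> n (\<delta> n 0 x))"
begin

lemma mor: "1 \<le> n \<Longrightarrow> k \<le> n \<Longrightarrow> ncps_mor (A (n-1)) (\<phi> (n-1)) (A n) (\<phi> n) (\<delta> n k)"
  using sco by (simp add: sco_def)

lemma dc: "k \<le> Suc m \<Longrightarrow> x \<in> alg_carrier (A m) \<Longrightarrow> \<delta> (Suc m) k x \<in> alg_carrier (A (Suc m))"
  using mor[of "Suc m" k] by (simp add: ncps_mor_def unital_hom_def)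

lemma ident: "i < j \<Longrightarrow> j \<le> Suc (Suc m) \<Longrightarrow> x \<in> alg_carrier (A m) \<Longrightarrow>
   \<delta> (Suc (Suc m)) j (\<delta> (Suc m) i x) = \<delta> (Suc (Suc m)) i (\<delta> (Suc m) (j - 1) x)"
proof -
  assume a: "i < j" "j \<le> Suc (Suc m)" "x \<in> alg_carrier (A m)"
  have "\<forall>n i j. 1 \<le> n \<longrightarrow> i < j \<longrightarrow> j \<le> n + 1 \<longrightarrow>
        (\<forall>x\<in>alg_carrier (A (n - 1)). \<delta> (n + 1) j (\<delta> n i x) = \<delta> (n + 1) i (\<delta> n (j - 1) x))"
    using sco unfolding sco_def by blast
  from this[rule_format, of "Suc m" i j x] a show ?thesis by simp
qed

lemma Dz_c: "b \<in> alg_carrier (A 0) \<Longrightarrow> Dz \<delta> N b \<in> alg_carrier (A N)"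
  by (induction N) (auto intro: dc)

lemma fm_c: "x \<in> alg_carrier (A m) \<Longrightarrow> filt_map \<delta> m k x \<in> alg_carrier (A (m + k))"
  by (induction k) (auto intro: dc)

lemma fm_mu: "x \<in> alg_carrier (A m) \<Longrightarrow> \<mu> (m + k) (filt_map \<delta> m k x) = \<mu> m x"
proof (induction k)
  case 0 then show ?case by simp
next
  case (Suc k)
  have "filt_map \<delta> m k x \<in> alg_carrier (A (m + k))" using fm_c Suc.prems .
  then have "\<mu> (m + Suc k) (\<delta> (m + Suc k) (m + Suc k) (filt_map \<delta> m k x)) = \<mu> (m + k) (filt_map \<delta> m k x)"
  proof -
    have "\<forall>n. 1 \<le> n \<longrightarrow> (\<forall>x\<in>alg_carrier (A (n - 1)). \<mu> n (\<delta> n n x) = \<mu> (n - 1) x)"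
      using lim unfolding is_inductive_limit_def by blast
    from this[rule_format, of "m + Suc k"] \<open>filt_map \<delta> m k x \<in> alg_carrier (A (m + k))\<close> show ?thesis by simp
  qed
  then show ?case using Suc by simp
qed

lemma alpha_pow: "b \<in> alg_carrier (A 0) \<Longrightarrow> (\<alpha>0 ^^ N) (\<mu> 0 b) = \<mu> N (Dz \<delta> N b)"
proof (induction N)
  case 0 then show ?case by simp
next
  case (Suc N)
  have "Dz \<delta> N b \<in> alg_carrier (A N)" using Dz_c Suc.prems .
  then show ?case using Suc rel[rule_format, of "Suc N"] by simp
qed

lemma hh_c: "b \<in> alg_carrier (A 0) \<Longrightarrow> N \<le> n \<Longrightarrow> hh \<delta> n N b \<in> alg_carrier (A n)"
  unfolding hh_def using fm_c[OF Dz_c, of b N "n - N"] by simp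

lemma iota_hh: "b \<in> alg_carrier (A 0) \<Longrightarrow> N \<le> n \<Longrightarrow> (\<alpha>0 ^^ N) (\<mu> 0 b) = \<mu> n (hh \<delta> n N b)"
  unfolding hh_def using fm_mu[OF Dz_c, of b N "n - N"] alpha_pow by simp

lemma hh_diag: "hh \<delta> N N b = Dz \<delta> N b" by (simp add: hh_def)

lemma hh_step: "N \<le> m \<Longrightarrow> hh \<delta> (Suc m) N b = \<delta> (Suc m) (Suc m) (hh \<delta> m N b)"
proof -
  assume N: "N \<le> m"
  have e: "Suc m - N = Suc (m - N)" using N by simp
  show ?thesis unfolding hh_def e using N by simp
qed

lemma Q: "b \<in> alg_carrier (A 0) \<Longrightarrow> k \<le> m \<Longrightarrow> \<delta> (Suc m) k (Dz \<delta> m b) = Dz \<delta> (Suc m) b"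
proof (induction m arbitrary: k)
  case 0 then show ?case by simp
next
  case (Suc m)
  show ?case
  proof (cases k)
    case 0 then show ?thesis by simp
  next
    case (Suc k')
    have x: "Dz \<delta> m b \<in> alg_carrier (A m)" using Dz_c Suc.prems(1) .
    have "\<delta> (Suc (Suc m)) k (Dz \<delta> (Suc m) b) = \<delta> (Suc (Suc m)) k (\<delta> (Suc m) 0 (Dz \<delta> m b))" by simp
    also have "\<dots> = \<delta> (Suc (Suc m)) 0 (\<delta> (Suc m) k' (Dz \<delta> m b))"
      using ident[of 0 k m, OF _ _ x] Suc Suc.prems by simp
    also have "\<dots> = Dz \<delta> (Suc (Suc m)) b" using Suc.IH[of k'] Suc.prems Suc by simp
    finally show ?thesis .
  qed
qed

lemma gd1: "b \<in> alg_carrier (A 0) \<Longrightarrow> k \<le> Suc m \<Longrightarrow> N \<le> m \<Longrightarrow>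
   \<delta> (Suc m) k (hh \<delta> m N b) = hh \<delta> (Suc m) (if N < k then N else N + 1) b"
proof (induction m arbitrary: k N)
  case 0
  then have N: "N = 0" by simp
  show ?case
  proof (cases "k = Suc 0")
    case True then show ?thesis using N hh_step[of 0 0 b] by simp
  next
    case False
    then have "k = 0" using 0 by simp
    then show ?thesis using N by (simp add: hh_def)
  qed
next
  case (Suc m)
  show ?case
  proof (cases "k = Suc (Suc m)")
    case True then show ?thesis using Suc.prems hh_step[of N "Suc m" b] by simp
  next
    case False
    then have k: "k \<le> Suc m" using Suc.prems by simp
    show ?thesis
    proof (cases "N = Suc m")
      case True
      then have "\<delta> (Suc (Suc m)) k (hh \<delta> (Suc m) N b) = Dz \<delta> (Suc (Suc m)) b"
        using Q[OF Suc.prems(1) k] hh_diag by simp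
      then show ?thesis using True k hh_diag by simp
    next
      case False
      then have N: "N \<le> m" using Suc.prems by simp
      have x: "hh \<delta> m N b \<in> alg_carrier (A m)" using hh_c Suc.prems(1) N .
      have "\<delta> (Suc (Suc m)) k (hh \<delta> (Suc m) N b) = \<delta> (Suc (Suc m)) k (\<delta> (Suc m) (Suc m) (hh \<delta> m N b))"
        using hh_step[OF N] by simp
      also have "\<dots> = \<delta> (Suc (Suc m)) (Suc (Suc m)) (\<delta> (Suc m) k (hh \<delta> m N b))"
        using ident[of k "Suc (Suc m)" m, OF _ _ x] k by simp
      also have "\<dots> = \<delta> (Suc (Suc m)) (Suc (Suc m)) (hh \<delta> (Suc m) (if N < k then N else N + 1) b)"
        using Suc.IH[OF Suc.prems(1) k N] by simp
      also have "\<dots> = hh \<delta> (Suc (Suc m)) (if N < k then N else N + 1) b"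
        using hh_step[of "if N < k then N else N + 1" "Suc m" b] N by simp
      finally show ?thesis .
    qed
  qed
qed

lemma part1_spread: "spreadable (A 0) L \<psi> (\<lambda>N. (\<alpha>0 ^^ N) \<circ> \<mu> 0)"
  unfolding spreadable_def
proof (intro allI impI)
  fix i :: "nat \<Rightarrow> nat" and ws :: "(nat \<times> 'a) list"
  assume i: "strict_mono i" and ws: "set (map snd ws) \<subseteq> alg_carrier (A 0)"
  let ?\<iota> = "\<lambda>N. (\<alpha>0 ^^ N) \<circ> \<mu> 0"
  have gd: "\<And>n k N b. 1 \<le> n \<Longrightarrow> k \<le> n \<Longrightarrow> N \<le> n-1 \<Longrightarrow> b \<in> alg_carrier (A 0) \<Longrightarrow>
        \<delta> n k (hh \<delta> (n-1) N b) = hh \<delta> n (if N < k then N else N+1) b"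
  proof -
    fix n k N :: nat and b assume a: "1 \<le> n" "k \<le> n" "N \<le> n-1" "b \<in> alg_carrier (A 0)"
    then obtain m where n: "n = Suc m" by (cases n) auto
    show "\<delta> n k (hh \<delta> (n-1) N b) = hh \<delta> n (if N < k then N else N+1) b"
      using gd1[of b k m N] a n by simp
  qed
  have amb: "\<And>n ws. set (map snd ws) \<subseteq> alg_carrier (A 0) \<Longrightarrow> (\<forall>p\<in>set ws. fst p \<le> n) \<Longrightarrow>
        \<psi> (mprod L (map (\<lambda>(N, b). ?\<iota> N b) ws)) = \<phi> n (mprod (A n) (map (\<lambda>(N, b). hh \<delta> n N b) ws))"
  proof -
    fix n and ws :: "(nat \<times> 'a) list"
    assume ws: "set (map snd ws) \<subseteq> alg_carrier (A 0)" and wn: "\<forall>p\<in>set ws. fst p \<le> n"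
    have M: "ncps_mor (A n) (\<phi> n) L \<psi> (\<mu> n)" using lim by (simp add: is_inductive_limit_def)
    then have uaA: "unital_algebra (A n)" and h: "unital_hom (A n) L (\<mu> n)"
      by (simp_all add: ncps_mor_def ncps_def)
    let ?xs = "map (\<lambda>(N, b). hh \<delta> n N b) ws"
    have xs: "set ?xs \<subseteq> alg_carrier (A n)" using hh_c ws wn by (force simp: image_iff)
    have e: "map (\<lambda>(N, b). ?\<iota> N b) ws = map (\<mu> n) ?xs" using iota_hh ws wn by (force simp: image_iff)
    have "mprod L (map (\<lambda>(N, b). ?\<iota> N b) ws) = \<mu> n (mprod (A n) ?xs)"
      unfolding e using hom_mprod[OF h uaA xs] by simp
    then show "\<psi> (mprod L (map (\<lambda>(N, b). ?\<iota> N b) ws)) = \<phi> n (mprod (A n) ?xs)"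
      using M ua.mprod_c[OF ua.intro[OF uaA] xs] by (simp add: ncps_mor_def)
  qed
  have gc: "\<And>n N b. N \<le> n \<Longrightarrow> b \<in> alg_carrier (A 0) \<Longrightarrow> hh \<delta> n N b \<in> alg_carrier (A n)"
    using hh_c by blast
  show "\<psi> (mprod L (map (\<lambda>(N, b). ?\<iota> N b) ws)) = \<psi> (mprod L (map (\<lambda>(N, b). ?\<iota> (i N) b) ws))"
    using spread_final[where \<Phi>="\<lambda>xs. \<psi> (mprod L xs)" and \<iota>="?\<iota>" and C=A and \<psi>=\<phi> and d=\<delta> and g="hh \<delta>" and S="alg_carrier (A 0)", OF mor gd gc amb i ws] by simp
qed

end


definition supp :: "('w \<Rightarrow> complex) \<Rightarrow> 'w set" where "supp f = {w. f w \<noteq> 0}"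

lemma W_simps[simp]:
  "alg_carrier (word_alg S) = {f. finite {w. f w \<noteq> 0} \<and> (\<forall>w. f w \<noteq> 0 \<longrightarrow> set (map snd w) \<subseteq> S)}"
  "alg_add (word_alg S) = (\<lambda>f g w. f w + g w)"
  "alg_mult (word_alg S) = (\<lambda>f g w. \<Sum>i\<le>length w. f (take i w) * g (drop i w))"
  "alg_smult (word_alg S) = (\<lambda>c f w. c * f w)"
  "alg_zero (word_alg S) = (\<lambda>w. 0)"
  "alg_one (word_alg S) = (\<lambda>w. if w = [] then 1 else 0)"
  by (simp_all add: word_alg_def)

lemma W_sub: "alg_sub (word_alg S) f g = (\<lambda>w. f w - g w)"
  by (simp add: alg_sub_def)

lemma Wmult_nz: assumes "(\<Sum>i\<le>length w. f (take i w) * g (drop i w)) \<noteq> (0::complex)"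
  shows "\<exists>u v. w = u @ v \<and> f u \<noteq> 0 \<and> g v \<noteq> 0"
proof -
  obtain i where "f (take i w) * g (drop i w) \<noteq> 0" using assms sum.neutral by (metis (no_types, lifting))
  then show ?thesis by (intro exI[of _ "take i w"] exI[of _ "drop i w"]) auto
qed

lemma W_mult_c: assumes f: "f \<in> alg_carrier (word_alg S)" and g: "g \<in> alg_carrier (word_alg S)"
  shows "alg_mult (word_alg S) f g \<in> alg_carrier (word_alg S)"
proof -
  let ?h = "\<lambda>w. \<Sum>i\<le>length w. f (take i w) * g (drop i w)"
  have sub: "{w. ?h w \<noteq> 0} \<subseteq> (\<lambda>(u, v). u @ v) ` ({w. f w \<noteq> 0} \<times> {w. g w \<noteq> 0})"
    using Wmult_nz by fastforce
  have "finite {w. ?h w \<noteq> 0}" using f g by (intro finite_subset[OF sub]) auto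
  moreover have "\<forall>w. ?h w \<noteq> 0 \<longrightarrow> set (map snd w) \<subseteq> S"
  proof (intro allI impI)
    fix w assume "?h w \<noteq> 0"
    then obtain u v where "w = u @ v" "f u \<noteq> 0" "g v \<noteq> 0" using Wmult_nz by blast
    then show "set (map snd w) \<subseteq> S" using f g by auto
  qed
  ultimately show ?thesis by simp
qed

lemma W_add_c: "f \<in> alg_carrier (word_alg S) \<Longrightarrow> g \<in> alg_carrier (word_alg S) \<Longrightarrow>
   alg_add (word_alg S) f g \<in> alg_carrier (word_alg S)"
proof -
  assume f: "f \<in> alg_carrier (word_alg S)" and g: "g \<in> alg_carrier (word_alg S)"
  have "{w. f w + g w \<noteq> 0} \<subseteq> {w. f w \<noteq> 0} \<union> {w. g w \<noteq> 0}" by auto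
  then have "finite {w. f w + g w \<noteq> 0}" using f g by (auto intro: finite_subset)
  moreover have "\<forall>w. f w + g w \<noteq> 0 \<longrightarrow> set (map snd w) \<subseteq> S" using f g
    by (metis (mono_tags, lifting) add.right_neutral add_0 mem_Collect_eq W_simps(1))
  ultimately show ?thesis by simp
qed

lemma W_smult_c: "f \<in> alg_carrier (word_alg S) \<Longrightarrow> alg_smult (word_alg S) c f \<in> alg_carrier (word_alg S)"
proof -
  assume f: "f \<in> alg_carrier (word_alg S)"
  have "{w. c * f w \<noteq> 0} \<subseteq> {w. f w \<noteq> 0}" by auto
  then show ?thesis using f by (auto intro: finite_subset)
qed

lemma W_one_c: "alg_one (word_alg S) \<in> alg_carrier (word_alg S)"
proof -
  have "{w. (if w = [] then 1 else 0) \<noteq> (0::complex)} = {[]}" by auto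
  then show ?thesis by simp
qed

lemma W_zero_c: "alg_zero (word_alg S) \<in> alg_carrier (word_alg S)" by simp

lemma conv_assoc:
  fixes f g h :: "'w list \<Rightarrow> complex"
  shows "(\<Sum>i\<le>length w. (\<Sum>j\<le>length (take i w). f (take j (take i w)) * g (drop j (take i w))) * h (drop i w))
       = (\<Sum>j\<le>length w. f (take j w) * (\<Sum>l\<le>length (drop j w). g (take l (drop j w)) * h (drop l (drop j w))))"
proof -
  let ?n = "length w"
  define G where "G j l = f (take j w) * g (take l (drop j w)) * h (drop l (drop j w))" for j l
  have L: "(\<Sum>i\<le>?n. (\<Sum>j\<le>length (take i w). f (take j (take i w)) * g (drop j (take i w))) * h (drop i w))
      = (\<Sum>i\<le>?n. \<Sum>j\<le>i. G j (i - j))"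
  proof (rule sum.cong[OF refl])
    fix i assume i: "i \<in> {..?n}"
    have "(\<Sum>j\<le>length (take i w). f (take j (take i w)) * g (drop j (take i w))) * h (drop i w)
        = (\<Sum>j\<le>i. f (take j (take i w)) * g (drop j (take i w)) * h (drop i w))"
      using i by (simp add: sum_distrib_right min_def)
    also have "\<dots> = (\<Sum>j\<le>i. G j (i - j))"
    proof (rule sum.cong[OF refl])
      fix j assume j: "j \<in> {..i}"
      have "take j (take i w) = take j w" using j by (simp add: min_def)
      moreover have "drop j (take i w) = take (i - j) (drop j w)" using j by (simp add: drop_take)
      moreover have "drop i w = drop (i - j) (drop j w)" using j by simp
      ultimately show "f (take j (take i w)) * g (drop j (take i w)) * h (drop i w) = G j (i - j)"
        unfolding G_def by simp
    qed
    finally show "(\<Sum>j\<le>length (take i w). f (take j (take i w)) * g (drop j (take i w))) * h (drop i w)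
        = (\<Sum>j\<le>i. G j (i - j))" .
  qed
  have R: "(\<Sum>j\<le>?n. f (take j w) * (\<Sum>l\<le>length (drop j w). g (take l (drop j w)) * h (drop l (drop j w))))
      = (\<Sum>j\<le>?n. \<Sum>l\<le>?n - j. G j l)"
    unfolding G_def by (simp add: sum_distrib_left mult.assoc)
  have T: "(\<Sum>i\<le>?n. \<Sum>j\<le>i. G j (i - j)) = (\<Sum>(j, l)\<in>{(j, l). j + l \<le> ?n}. G j l)"
    using sum.triangle_reindex_eq[of G ?n] by simp
  have E: "{(j, l). j + l \<le> ?n} = Sigma {..?n} (\<lambda>j. {..?n - j})" by auto
  have T2: "(\<Sum>(j, l)\<in>{(j, l). j + l \<le> ?n}. G j l) = (\<Sum>j\<le>?n. \<Sum>l\<le>?n - j. G j l)"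
    unfolding E by (subst sum.Sigma) auto
  show ?thesis using L R T T2 by simp
qed

lemma W_ua: "unital_algebra (word_alg S)"
  unfolding unital_algebra_def Let_def
proof (intro conjI allI ballI)
  let ?W = "word_alg S"
  show "alg_zero ?W \<in> alg_carrier ?W" "alg_one ?W \<in> alg_carrier ?W" using W_zero_c W_one_c by blast+
  fix x y assume x: "x \<in> alg_carrier ?W" and y: "y \<in> alg_carrier ?W"
  show "alg_add ?W x y \<in> alg_carrier ?W" using W_add_c x y .
  show "alg_mult ?W x y \<in> alg_carrier ?W" using W_mult_c x y .
  show "alg_add ?W x y = alg_add ?W y x" by (auto simp: add.commute)
  fix z assume z: "z \<in> alg_carrier ?W"
  show "alg_add ?W (alg_add ?W x y) z = alg_add ?W x (alg_add ?W y z)" by (auto simp: add.assoc)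
  show "alg_mult ?W (alg_mult ?W x y) z = alg_mult ?W x (alg_mult ?W y z)"
    using conv_assoc[where f=x and g=y and h=z] by (simp add: fun_eq_iff)
  show "alg_mult ?W x (alg_add ?W y z) = alg_add ?W (alg_mult ?W x y) (alg_mult ?W x z)"
    by (simp add: fun_eq_iff distrib_left sum.distrib)
  show "alg_mult ?W (alg_add ?W x y) z = alg_add ?W (alg_mult ?W x z) (alg_mult ?W y z)"
    by (simp add: fun_eq_iff distrib_right sum.distrib)
next
  let ?W = "word_alg S"
  fix c x assume x: "x \<in> alg_carrier ?W"
  show "alg_smult ?W c x \<in> alg_carrier ?W" using W_smult_c x .
next
  let ?W = "word_alg S"
  fix x assume x: "x \<in> alg_carrier ?W"
  show "alg_add ?W (alg_zero ?W) x = x" by simp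
  show "alg_add ?W x (alg_smult ?W (-1) x) = alg_zero ?W" by simp
  show "alg_smult ?W 1 x = x" by simp
  show "alg_mult ?W (alg_one ?W) x = x"
  proof (rule ext)
    fix w
    have "(\<Sum>i\<le>length w. (if take i w = [] then 1 else 0) * x (drop i w)) = x w"
      by (subst sum.atMost_shift) auto
    then show "alg_mult ?W (alg_one ?W) x w = x w" by simp
  qed
  show "alg_mult ?W x (alg_one ?W) = x"
  proof (rule ext)
    fix w
    have "(\<Sum>i\<le>length w. x (take i w) * (if drop i w = [] then 1 else 0)) = x w"
    proof -
      have "\<And>i. i \<in> {..length w} \<Longrightarrow> x (take i w) * (if drop i w = [] then 1 else 0) = (if i = length w then x w else 0)"
        by auto
      then have "(\<Sum>i\<le>length w. x (take i w) * (if drop i w = [] then 1 else 0)) = (\<Sum>i\<le>length w. (if i = length w then x w else 0))"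
        by (rule sum.cong[OF refl])
      then show ?thesis by simp
    qed
    then show "alg_mult ?W x (alg_one ?W) w = x w" by simp
  qed
next
  let ?W = "word_alg S"
  fix c x y assume x: "x \<in> alg_carrier ?W" and y: "y \<in> alg_carrier ?W"
  show "alg_smult ?W c (alg_add ?W x y) = alg_add ?W (alg_smult ?W c x) (alg_smult ?W c y)"
    by (simp add: distrib_left)
  show "alg_smult ?W c (alg_mult ?W x y) = alg_mult ?W (alg_smult ?W c x) y"
    by (simp add: fun_eq_iff sum_distrib_left mult.assoc)
  show "alg_smult ?W c (alg_mult ?W x y) = alg_mult ?W x (alg_smult ?W c y)"
    by (simp add: fun_eq_iff sum_distrib_left mult.left_commute)
next
  let ?W = "word_alg S"
  fix c d x assume x: "x \<in> alg_carrier ?W"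
  show "alg_smult ?W (c + d) x = alg_add ?W (alg_smult ?W c x) (alg_smult ?W d x)"
    by (simp add: distrib_right)
  show "alg_smult ?W c (alg_smult ?W d x) = alg_smult ?W (c * d) x" by (simp add: mult.assoc)
qed


lemma conv_diff: fixes a x b y :: "nat \<Rightarrow> complex"
 shows "(\<Sum>i\<in>I. (a i - x i) * b i) + (\<Sum>i\<in>I. x i * (b i - y i)) = (\<Sum>i\<in>I. a i * b i) - (\<Sum>i\<in>I. x i * y i)"
  by (simp add: algebra_simps sum_subtractf)

lemma ideal_carrier_W: "alg_ideal (word_alg S) (alg_carrier (word_alg S))"
  unfolding alg_ideal_def
  using W_zero_c[of S] W_add_c[of _ S] W_smult_c[of _ S] W_mult_c[of _ S] by (intro conjI ballI allI; simp only: subset_refl)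

lemma ideal_Inter: "\<I> \<noteq> {} \<Longrightarrow> (\<And>J. J \<in> \<I> \<Longrightarrow> alg_ideal A J) \<Longrightarrow> alg_ideal A (\<Inter>\<I>)"
  unfolding alg_ideal_def by (intro conjI; blast)

locale wq =
  fixes S :: "'b set" and R :: "((nat \<times> 'b) list \<Rightarrow> complex) set"
  assumes Rc: "R \<subseteq> alg_carrier (word_alg S)"
begin

abbreviation "W \<equiv> word_alg S"
abbreviation "J \<equiv> gen_ideal W R"
abbreviation "Q \<equiv> quot_alg W J"
abbreviation "cl \<equiv> qcls W J"

lemma J_ideal: "alg_ideal W J"
  unfolding gen_ideal_def using ideal_carrier_W Rc by (intro ideal_Inter) auto

lemma RJ: "R \<subseteq> J" unfolding gen_ideal_def by blast

lemma Jc: "J \<subseteq> alg_carrier W" using J_ideal by (simp add: alg_ideal_def)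

lemma J0: "(\<lambda>w. 0) \<in> J" using J_ideal by (simp add: alg_ideal_def)
lemma Jadd: "a \<in> J \<Longrightarrow> b \<in> J \<Longrightarrow> (\<lambda>w. a w + b w) \<in> J"
  using J_ideal unfolding alg_ideal_def by simp
lemma Jsm: "a \<in> J \<Longrightarrow> (\<lambda>w. c * a w) \<in> J"
  using J_ideal unfolding alg_ideal_def by simp
lemma Jml: "a \<in> alg_carrier W \<Longrightarrow> x \<in> J \<Longrightarrow> alg_mult W a x \<in> J"
  using J_ideal unfolding alg_ideal_def by blast
lemma Jmr: "a \<in> alg_carrier W \<Longrightarrow> x \<in> J \<Longrightarrow> alg_mult W x a \<in> J"
  using J_ideal unfolding alg_ideal_def by blast
lemma Jsub: "a \<in> J \<Longrightarrow> b \<in> J \<Longrightarrow> (\<lambda>w. a w - b w) \<in> J"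
proof -
  assume a: "a \<in> J" and b: "b \<in> J"
  have "(\<lambda>w. a w + (\<lambda>w. (-1) * b w) w) \<in> J" using Jadd[OF a Jsm[OF b]] .
  then show ?thesis by simp
qed

lemma cl_def': "cl x = {y \<in> alg_carrier W. (\<lambda>w. y w - x w) \<in> J}"
  by (simp add: qcls_def W_sub)

lemma cl_self: "x \<in> alg_carrier W \<Longrightarrow> x \<in> cl x"
  unfolding cl_def' using J0 by simp

lemma cl_eq: assumes x: "x \<in> alg_carrier W" and y: "y \<in> alg_carrier W"
  shows "cl x = cl y \<longleftrightarrow> (\<lambda>w. x w - y w) \<in> J"
proof
  assume "cl x = cl y"
  then show "(\<lambda>w. x w - y w) \<in> J" using cl_self[OF x] unfolding cl_def' by blast
next
  assume xy: "(\<lambda>w. x w - y w) \<in> J"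
  show "cl x = cl y" unfolding cl_def'
  proof (intro Collect_cong conj_cong refl iffI)
    fix z assume "(\<lambda>w. z w - x w) \<in> J"
    from Jadd[OF this xy] show "(\<lambda>w. z w - y w) \<in> J" by simp
  next
    fix z assume "(\<lambda>w. z w - y w) \<in> J"
    from Jsub[OF this xy] show "(\<lambda>w. z w - x w) \<in> J" by simp
  qed
qed

lemma qrep_cl: assumes x: "x \<in> alg_carrier W"
  shows "qrep (cl x) \<in> alg_carrier W" "(\<lambda>w. qrep (cl x) w - x w) \<in> J" "cl (qrep (cl x)) = cl x"
proof -
  have "qrep (cl x) \<in> cl x" unfolding qrep_def using cl_self[OF x] by (rule someI[where P="\<lambda>z. z \<in> cl x"])
  then show a: "qrep (cl x) \<in> alg_carrier W" and b: "(\<lambda>w. qrep (cl x) w - x w) \<in> J"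
    unfolding cl_def' by auto
  show "cl (qrep (cl x)) = cl x" using cl_eq[OF a x] b by simp
qed

lemma Q_simps:
  "alg_carrier Q = cl ` alg_carrier W" "alg_zero Q = cl (alg_zero W)" "alg_one Q = cl (alg_one W)"
  by (simp_all add: quot_alg_def del: W_simps)

lemma Q_add: assumes x: "x \<in> alg_carrier W" and y: "y \<in> alg_carrier W"
  shows "alg_add Q (cl x) (cl y) = cl (alg_add W x y)"
proof -
  let ?a = "qrep (cl x)" and ?b = "qrep (cl y)"
  have "alg_add Q (cl x) (cl y) = cl (alg_add W ?a ?b)" by (simp add: quot_alg_def)
  also have "\<dots> = cl (alg_add W x y)"
  proof (subst cl_eq)
    show "alg_add W ?a ?b \<in> alg_carrier W" using W_add_c qrep_cl(1) x y by blast
    show "alg_add W x y \<in> alg_carrier W" using W_add_c x y by blast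
    have "(\<lambda>w. (\<lambda>w. ?a w - x w) w + (\<lambda>w. ?b w - y w) w) \<in> J" using Jadd qrep_cl(2) x y by blast
    then show "(\<lambda>w. alg_add W ?a ?b w - alg_add W x y w) \<in> J" by (simp add: algebra_simps)
  qed
  finally show ?thesis .
qed

lemma Q_smult: assumes x: "x \<in> alg_carrier W"
  shows "alg_smult Q c (cl x) = cl (alg_smult W c x)"
proof -
  let ?a = "qrep (cl x)"
  have "alg_smult Q c (cl x) = cl (alg_smult W c ?a)" by (simp add: quot_alg_def)
  also have "\<dots> = cl (alg_smult W c x)"
  proof (subst cl_eq)
    show "alg_smult W c ?a \<in> alg_carrier W" using W_smult_c qrep_cl(1) x by blast
    show "alg_smult W c x \<in> alg_carrier W" using W_smult_c x by blast
    have "(\<lambda>w. c * (\<lambda>w. ?a w - x w) w) \<in> J" using Jsm qrep_cl(2) x by blast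
    then show "(\<lambda>w. alg_smult W c ?a w - alg_smult W c x w) \<in> J" by (simp add: algebra_simps)
  qed
  finally show ?thesis .
qed

lemma Q_mult: assumes x: "x \<in> alg_carrier W" and y: "y \<in> alg_carrier W"
  shows "alg_mult Q (cl x) (cl y) = cl (alg_mult W x y)"
proof -
  let ?a = "qrep (cl x)" and ?b = "qrep (cl y)"
  have ac: "?a \<in> alg_carrier W" and bc: "?b \<in> alg_carrier W" using qrep_cl(1) x y by blast+
  have "alg_mult Q (cl x) (cl y) = cl (alg_mult W ?a ?b)" by (simp add: quot_alg_def)
  also have "\<dots> = cl (alg_mult W x y)"
  proof (subst cl_eq)
    show "alg_mult W ?a ?b \<in> alg_carrier W" using W_mult_c ac bc by blast
    show "alg_mult W x y \<in> alg_carrier W" using W_mult_c x y by blast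
    have d1: "alg_mult W (\<lambda>w. ?a w - x w) ?b \<in> J" using Jmr[OF bc qrep_cl(2)[OF x]] .
    have d2: "alg_mult W x (\<lambda>w. ?b w - y w) \<in> J" using Jml[OF x qrep_cl(2)[OF y]] .
    have "(\<lambda>w. alg_mult W (\<lambda>w. ?a w - x w) ?b w + alg_mult W x (\<lambda>w. ?b w - y w) w) \<in> J"
      using Jadd[OF d1 d2] .
    moreover have "(\<lambda>w. alg_mult W (\<lambda>w. ?a w - x w) ?b w + alg_mult W x (\<lambda>w. ?b w - y w) w)
        = (\<lambda>w. alg_mult W ?a ?b w - alg_mult W x y w)"
      by (rule ext) (simp add: conv_diff)
    ultimately show "(\<lambda>w. alg_mult W ?a ?b w - alg_mult W x y w) \<in> J" by simp
  qed
  finally show ?thesis .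
qed

lemma Q_cases: "X \<in> alg_carrier Q \<Longrightarrow> (\<And>x. x \<in> alg_carrier W \<Longrightarrow> X = cl x \<Longrightarrow> P) \<Longrightarrow> P"
  using Q_simps(1) by blast

lemma Q_ua: "unital_algebra Q"
proof -
  interpret W: ua W using W_ua by (rule ua.intro)
  note cW = W.zero_c W.one_c W.add_c W.mult_c W.smult_c
  show ?thesis
  unfolding unital_algebra_def Let_def
  proof (intro conjI allI ballI)
    show "alg_zero Q \<in> alg_carrier Q" "alg_one Q \<in> alg_carrier Q" using Q_simps W.one_c W.zero_c by (auto simp del: W_simps)
  next
    fix X Y assume "X \<in> alg_carrier Q" "Y \<in> alg_carrier Q"
    then obtain x y where x: "x \<in> alg_carrier W" "X = cl x" and y: "y \<in> alg_carrier W" "Y = cl y"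
      by (metis Q_cases)
    show "alg_add Q X Y \<in> alg_carrier Q" "alg_mult Q X Y \<in> alg_carrier Q"
      using x y Q_add Q_mult Q_simps(1) cW by (auto simp del: W_simps)
    show "alg_add Q X Y = alg_add Q Y X" using x y Q_add W.add_comm by (simp del: W_simps)
    {
      fix Z assume "Z \<in> alg_carrier Q"
      then obtain z where z: "z \<in> alg_carrier W" "Z = cl z" by (metis Q_cases)
      show "alg_add Q (alg_add Q X Y) Z = alg_add Q X (alg_add Q Y Z)"
        using x y z Q_add W.add_assoc cW by (simp del: W_simps)
      show "alg_mult Q (alg_mult Q X Y) Z = alg_mult Q X (alg_mult Q Y Z)"
        using x y z Q_mult W.mult_assoc cW by (simp del: W_simps)
      show "alg_mult Q X (alg_add Q Y Z) = alg_add Q (alg_mult Q X Y) (alg_mult Q X Z)"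
        using x y z Q_mult Q_add W.distl cW by (simp del: W_simps)
      show "alg_mult Q (alg_add Q X Y) Z = alg_add Q (alg_mult Q X Z) (alg_mult Q Y Z)"
        using x y z Q_mult Q_add W.distr cW by (simp del: W_simps)
    }
    fix c
    show "alg_smult Q c (alg_mult Q X Y) = alg_mult Q (alg_smult Q c X) Y"
      using x y Q_mult Q_smult W.smult_multl cW by (simp del: W_simps)
    show "alg_smult Q c (alg_mult Q X Y) = alg_mult Q X (alg_smult Q c Y)"
      using x y Q_mult Q_smult W.smult_multr cW by (simp del: W_simps)
    show "alg_smult Q c (alg_add Q X Y) = alg_add Q (alg_smult Q c X) (alg_smult Q c Y)"
      using x y Q_add Q_smult W.smult_add cW by (simp del: W_simps)
  next
    fix c X assume "X \<in> alg_carrier Q"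
    then obtain x where x: "x \<in> alg_carrier W" "X = cl x" by (metis Q_cases)
    show "alg_smult Q c X \<in> alg_carrier Q" using x Q_smult Q_simps(1) cW by (auto simp del: W_simps)
    fix d
    show "alg_smult Q (c + d) X = alg_add Q (alg_smult Q c X) (alg_smult Q d X)"
      using x Q_add Q_smult W.add_smult cW by (simp del: W_simps)
    show "alg_smult Q c (alg_smult Q d X) = alg_smult Q (c * d) X"
      using x Q_smult W.smult_smult cW by (simp del: W_simps)
  next
    fix X assume "X \<in> alg_carrier Q"
    then obtain x where x: "x \<in> alg_carrier W" "X = cl x" by (metis Q_cases)
    show "alg_add Q (alg_zero Q) X = X" using x Q_add Q_simps W.add_zero cW by (simp del: W_simps)
    show "alg_add Q X (alg_smult Q (-1) X) = alg_zero Q"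
      using x Q_add Q_smult Q_simps W.add_neg cW by (simp del: W_simps)
    show "alg_smult Q 1 X = X" using x Q_smult W.smult_one by (simp del: W_simps)
    show "alg_mult Q (alg_one Q) X = X" using x Q_mult Q_simps W.one_mult cW by (simp del: W_simps)
    show "alg_mult Q X (alg_one Q) = X" using x Q_mult Q_simps W.mult_one cW by (simp del: W_simps)
  qed
qed

end


declare W_simps(1)[simp del]

definition shf :: "nat \<Rightarrow> nat \<Rightarrow> nat" where "shf k N = (if N < k then N else N + 1)"
definition ush :: "nat \<Rightarrow> nat \<Rightarrow> nat" where "ush k N = (if N < k then N else N - 1)"

definition nok :: "nat \<Rightarrow> (nat \<times> 'b) list \<Rightarrow> bool" where "nok k w \<longleftrightarrow> (\<forall>p\<in>set w. fst p \<noteq> k)"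

definition rel :: "nat \<Rightarrow> ((nat \<times> 'b) list \<Rightarrow> complex) \<Rightarrow> ((nat \<times> 'b) list \<Rightarrow> complex)" where
  "rel k f = (\<lambda>w. if nok k w then f (map (\<lambda>(N, b). (ush k N, b)) w) else 0)"

lemma ush_shf[simp]: "ush k (shf k N) = N" by (simp add: ush_def shf_def)
lemma shf_ne[simp]: "shf k N \<noteq> k" by (simp add: shf_def)
lemma shf_ne2[simp]: "k \<noteq> shf k N" by (simp add: shf_def)
lemma shf_ush: "N \<noteq> k \<Longrightarrow> shf k (ush k N) = N" by (auto simp: ush_def shf_def)

lemma nok_map: "nok k w \<Longrightarrow> map (\<lambda>(N, b). (shf k N, b)) (map (\<lambda>(N, b). (ush k N, b)) w) = w"
  by (induction w) (auto simp: nok_def shf_ush)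

lemma rel_c: assumes f: "f \<in> alg_carrier (word_alg S)" shows "rel k f \<in> alg_carrier (word_alg S)"
proof -
  let ?u = "map (\<lambda>(N, b). (ush k N, b))" and ?s = "map (\<lambda>(N, b). (shf k N, b))"
  have "{w. rel k f w \<noteq> 0} \<subseteq> ?s ` {w. f w \<noteq> 0}"
  proof
    fix w assume "w \<in> {w. rel k f w \<noteq> 0}"
    then have "nok k w" "f (?u w) \<noteq> 0" by (auto simp: rel_def split: if_splits)
    then show "w \<in> ?s ` {w. f w \<noteq> 0}" using nok_map by (metis (mono_tags, lifting) image_eqI mem_Collect_eq)
  qed
  then have "finite {w. rel k f w \<noteq> 0}" using f by (auto intro: finite_subset simp: W_simps(1))
  moreover have "\<forall>w. rel k f w \<noteq> 0 \<longrightarrow> set (map snd w) \<subseteq> S"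
  proof (intro allI impI)
    fix w assume "rel k f w \<noteq> 0"
    then have nz: "f (?u w) \<noteq> 0" by (auto simp: rel_def split: if_splits)
    have fa: "\<forall>w. f w \<noteq> 0 \<longrightarrow> set (map snd w) \<subseteq> S" using f by (simp add: W_simps(1))
    have "set (map snd (?u w)) \<subseteq> S" using fa nz by blast
    moreover have "map snd (?u w) = map snd w" by (induction w) auto
    ultimately show "set (map snd w) \<subseteq> S" by simp
  qed
  ultimately show ?thesis by (simp add: W_simps(1))
qed

lemma rel_add: "rel k (\<lambda>w. f w + g w) = (\<lambda>w. rel k f w + rel k g w)" by (auto simp: rel_def)
lemma rel_sub: "rel k (\<lambda>w. f w - g w) = (\<lambda>w. rel k f w - rel k g w)" by (auto simp: rel_def)
lemma rel_sm: "rel k (\<lambda>w. c * f w) = (\<lambda>w. c * rel k f w)" by (auto simp: rel_def)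
lemma rel_zero: "rel k (\<lambda>w. 0) = (\<lambda>w. 0)" by (auto simp: rel_def)
lemma rel_one: "rel k (\<lambda>w. if w = [] then 1 else 0) = (\<lambda>w. if w = [] then 1 else 0)"
  by (auto simp: rel_def nok_def)
lemma rel_letter: "rel k (letter N b) = letter (shf k N) b"
proof (rule ext)
  fix w :: "(nat \<times> 'a) list"
  show "rel k (letter N b) w = letter (shf k N) b w"
  proof (cases "nok k w")
    case True
    have "map (\<lambda>(N, b). (ush k N, b)) w = [(N, b)] \<longleftrightarrow> w = [(shf k N, b)]"
    proof
      assume "map (\<lambda>(N, b). (ush k N, b)) w = [(N, b)]"
      then have "map (\<lambda>(N, b). (shf k N, b)) (map (\<lambda>(N, b). (ush k N, b)) w) = [(shf k N, b)]" by simp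
      then show "w = [(shf k N, b)]" using nok_map[OF True] by simp
    qed simp
    then show ?thesis using True by (simp add: rel_def letter_def)
  next
    case False
    then have "w \<noteq> [(shf k N, b)]" by (auto simp: nok_def)
    then show ?thesis using False by (simp add: rel_def letter_def)
  qed
qed

lemma nok_take_drop: "nok k w \<longleftrightarrow> nok k (take i w) \<and> nok k (drop i w)"
proof -
  have "set w = set (take i w) \<union> set (drop i w)" by (metis append_take_drop_id set_append)
  then show ?thesis by (auto simp: nok_def)
qed

lemma rel_mult: "rel k (\<lambda>w. \<Sum>i\<le>length w. f (take i w) * g (drop i w))
   = (\<lambda>w. \<Sum>i\<le>length w. rel k f (take i w) * rel k g (drop i w))"
proof (rule ext)
  fix w :: "(nat \<times> 'a) list"
  show "rel k (\<lambda>w. \<Sum>i\<le>length w. f (take i w) * g (drop i w)) w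
    = (\<Sum>i\<le>length w. rel k f (take i w) * rel k g (drop i w))"
  proof (cases "nok k w")
    case True
    then show ?thesis using nok_take_drop[of k w] by (simp add: rel_def take_map drop_map)
  next
    case False
    then have z: "\<And>i. rel k f (take i w) * rel k g (drop i w) = 0" using nok_take_drop[of k w]
      by (auto simp: rel_def)
    have "(\<Sum>i\<le>length w. rel k f (take i w) * rel k g (drop i w)) = 0" by (simp only: z sum.neutral_const)
    moreover have "rel k (\<lambda>w. \<Sum>i\<le>length w. f (take i w) * g (drop i w)) w = 0" using False by (simp add: rel_def)
    ultimately show ?thesis by simp
  qed
qed

locale fp =
  fixes B :: "'b alg"
  assumes uaB: "unital_algebra B"
begin

abbreviation "SB \<equiv> alg_carrier B"
abbreviation "R \<equiv> fp_rels B"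
abbreviation "F \<equiv> free_prod B"

lemma letter_c: "b \<in> SB \<Longrightarrow> letter N b \<in> alg_carrier (word_alg SB)"
proof -
  assume b: "b \<in> SB"
  have e: "{w. letter N b w \<noteq> 0} = {[(N, b)]}" by (auto simp: letter_def)
  have "\<forall>w. letter N b w \<noteq> 0 \<longrightarrow> set (map snd w) \<subseteq> SB" using b by (simp add: letter_def)
  then show ?thesis unfolding W_simps(1) using e by simp
qed

lemma sub_c: "x \<in> alg_carrier (word_alg SB) \<Longrightarrow> y \<in> alg_carrier (word_alg SB) \<Longrightarrow> alg_sub (word_alg SB) x y \<in> alg_carrier (word_alg SB)"
  unfolding alg_sub_def using W_add_c W_smult_c by blast

lemma R_c: "R \<subseteq> alg_carrier (word_alg SB)"
proof -
  interpret B: ua B using uaB by (rule ua.intro)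
  show ?thesis unfolding fp_rels_def Let_def
    by (auto intro!: sub_c letter_c W_add_c W_smult_c W_mult_c W_one_c B.add_c B.smult_c B.mult_c B.one_c simp del: W_simps)
qed

sublocale wq SB R using R_c by (rule wq.intro)

lemma F_eq: "F = Q" by (simp add: free_prod_def)

lemma F_ua: "unital_algebra F" using Q_ua F_eq by simp

lemma emb_eq: "fp_emb B N b = cl (letter N b)" by (simp add: fp_emb_def)

lemma emb_c: "b \<in> SB \<Longrightarrow> fp_emb B N b \<in> alg_carrier F"
  unfolding F_eq emb_eq Q_simps(1) by (rule imageI[OF letter_c])

definition sig :: "nat \<Rightarrow> ((nat \<times> 'b) list \<Rightarrow> complex) set \<Rightarrow> ((nat \<times> 'b) list \<Rightarrow> complex) set" where
  "sig k X = cl (rel k (qrep X))"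

lemma rel_J: "x \<in> J \<Longrightarrow> rel k x \<in> J"
proof -
  let ?P = "{x \<in> alg_carrier W. rel k x \<in> J}"
  have "alg_ideal W ?P" unfolding alg_ideal_def
  proof (intro conjI ballI allI)
    show "?P \<subseteq> alg_carrier W" by blast
    show "alg_zero W \<in> ?P" using J0 Jc by (auto simp: rel_zero)
    fix x y assume x: "x \<in> ?P" and y: "y \<in> ?P"
    have "alg_add W x y \<in> alg_carrier W" using W_add_c x y by blast
    moreover have "rel k (alg_add W x y) \<in> J" using Jadd[of "rel k x" "rel k y"] x y by (simp add: rel_add)
    ultimately show "alg_add W x y \<in> ?P" by blast
  next
    fix c x assume x: "x \<in> ?P"
    have "alg_smult W c x \<in> alg_carrier W" using W_smult_c x by blast
    moreover have "rel k (alg_smult W c x) \<in> J" using Jsm[of "rel k x" c] x by (simp add: rel_sm)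
    ultimately show "alg_smult W c x \<in> ?P" by blast
  next
    fix a x assume a: "a \<in> alg_carrier W" and x: "x \<in> ?P"
    have ra: "rel k a \<in> alg_carrier W" using rel_c a .
    have "rel k (alg_mult W a x) = alg_mult W (rel k a) (rel k x)" by (simp add: rel_mult)
    moreover have "rel k (alg_mult W x a) = alg_mult W (rel k x) (rel k a)" by (simp add: rel_mult)
    moreover have "rel k x \<in> J" using x by blast
    moreover have "alg_mult W a x \<in> alg_carrier W" "alg_mult W x a \<in> alg_carrier W"
      using W_mult_c a x by blast+
    ultimately show "alg_mult W a x \<in> ?P" "alg_mult W x a \<in> ?P"
      using Jml[OF ra, of "rel k x"] Jmr[OF ra, of "rel k x"] by simp_all
  qed
  moreover have "R \<subseteq> ?P"
  proof
    fix r assume r: "r \<in> R"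
    have rc: "r \<in> alg_carrier W" using r R_c by blast
    have "rel k r \<in> R" using r[unfolded fp_rels_def Let_def]
    proof (elim UnE CollectE exE conjE)
      fix N b b' assume e: "r = alg_sub W (letter N (alg_add B b b')) (alg_add W (letter N b) (letter N b'))"
        and b: "b \<in> SB" "b' \<in> SB"
      have "rel k r = alg_sub W (letter (shf k N) (alg_add B b b')) (alg_add W (letter (shf k N) b) (letter (shf k N) b'))"
        unfolding e W_sub W_simps by (simp only: rel_sub rel_add rel_letter)
      then show ?thesis unfolding fp_rels_def Let_def using b by blast
    next
      fix N c b assume e: "r = alg_sub W (letter N (alg_smult B c b)) (alg_smult W c (letter N b))"
        and b: "b \<in> SB"
      have "rel k r = alg_sub W (letter (shf k N) (alg_smult B c b)) (alg_smult W c (letter (shf k N) b))"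
        unfolding e W_sub W_simps by (simp only: rel_sub rel_sm rel_letter)
      then show ?thesis unfolding fp_rels_def Let_def using b by blast
    next
      fix N b b' assume e: "r = alg_sub W (letter N (alg_mult B b b')) (alg_mult W (letter N b) (letter N b'))"
        and b: "b \<in> SB" "b' \<in> SB"
      have "rel k r = alg_sub W (letter (shf k N) (alg_mult B b b')) (alg_mult W (letter (shf k N) b) (letter (shf k N) b'))"
        unfolding e W_sub W_simps by (simp only: rel_sub rel_mult rel_letter)
      then show ?thesis unfolding fp_rels_def Let_def using b by blast
    next
      fix N assume e: "r = alg_sub W (letter N (alg_one B)) (alg_one W)"
      have "rel k r = alg_sub W (letter (shf k N) (alg_one B)) (alg_one W)"
        unfolding e W_sub W_simps by (simp only: rel_sub rel_one rel_letter)
      then show ?thesis unfolding fp_rels_def Let_def by blast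
    qed
    then show "r \<in> ?P" using rc RJ by blast
  qed
  ultimately have "J \<subseteq> ?P" unfolding gen_ideal_def by (intro Inter_lower) simp
  then show "x \<in> J \<Longrightarrow> rel k x \<in> J" by blast
qed

lemma sig_cl: assumes x: "x \<in> alg_carrier W" shows "sig k (cl x) = cl (rel k x)"
proof -
  have "(\<lambda>w. rel k (qrep (cl x)) w - rel k x w) \<in> J"
    using rel_J[OF qrep_cl(2)[OF x]] by (simp add: rel_sub)
  then show ?thesis unfolding sig_def using cl_eq rel_c qrep_cl(1)[OF x] x by blast
qed

lemma rel_addW: "rel k (alg_add W x y) = alg_add W (rel k x) (rel k y)" by (simp add: rel_add)
lemma rel_multW: "rel k (alg_mult W x y) = alg_mult W (rel k x) (rel k y)" by (simp add: rel_mult)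
lemma rel_smW: "rel k (alg_smult W c x) = alg_smult W c (rel k x)" by (simp add: rel_sm)
lemma rel_oneW: "rel k (alg_one W) = alg_one W" by (simp add: rel_one)

lemma sig_hom: "unital_hom F F (sig k)"
  unfolding unital_hom_def F_eq
proof (intro conjI ballI allI)
  fix X assume "X \<in> alg_carrier Q"
  then obtain x where x: "x \<in> alg_carrier W" "X = cl x" by (metis Q_cases)
  show "sig k X \<in> alg_carrier Q" unfolding x(2) sig_cl[OF x(1)] Q_simps(1) by (rule imageI[OF rel_c[OF x(1)]])
  fix Y assume "Y \<in> alg_carrier Q"
  then obtain y where y: "y \<in> alg_carrier W" "Y = cl y" by (metis Q_cases)
  show "sig k (alg_add Q X Y) = alg_add Q (sig k X) (sig k Y)"
    unfolding x(2) y(2) Q_add[OF x(1) y(1)] sig_cl[OF x(1)] sig_cl[OF y(1)] sig_cl[OF W_add_c[OF x(1) y(1)]]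
      Q_add[OF rel_c[OF x(1)] rel_c[OF y(1)]] rel_addW ..
  show "sig k (alg_mult Q X Y) = alg_mult Q (sig k X) (sig k Y)"
    unfolding x(2) y(2) Q_mult[OF x(1) y(1)] sig_cl[OF x(1)] sig_cl[OF y(1)] sig_cl[OF W_mult_c[OF x(1) y(1)]]
      Q_mult[OF rel_c[OF x(1)] rel_c[OF y(1)]] rel_multW ..
next
  fix c X assume "X \<in> alg_carrier Q"
  then obtain x where x: "x \<in> alg_carrier W" "X = cl x" by (metis Q_cases)
  show "sig k (alg_smult Q c X) = alg_smult Q c (sig k X)"
    unfolding x(2) Q_smult[OF x(1)] sig_cl[OF x(1)] sig_cl[OF W_smult_c[OF x(1)]]
      Q_smult[OF rel_c[OF x(1)]] rel_smW ..
next
  show "sig k (alg_one Q) = alg_one Q" unfolding Q_simps(3) sig_cl[OF W_one_c] rel_oneW ..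
qed

lemma sig_emb: "b \<in> SB \<Longrightarrow> sig k (fp_emb B N b) = fp_emb B (shf k N) b"
  using emb_eq sig_cl letter_c rel_letter by metis

end


lemma lc_restr[simp]: "lc (restr_alg A C) gen cs = lc A gen cs"
  by (simp add: lc_def restr_alg_def mprod_def)

lemma lc_cong: "(\<And>a. a \<in> G \<Longrightarrow> gen a = gen' a) \<Longrightarrow> okl g0 G cs \<Longrightarrow> lc X gen cs = lc X gen' cs"
proof (induction cs)
  case Nil then show ?case by simp
next
  case (Cons p cs)
  obtain c w where p: "p = (c, w)" by force
  have o: "okl g0 G cs" "set w \<subseteq> G" using Cons.prems p by (auto simp: okl_def)
  have m: "map gen w = map gen' w" using o(2) Cons.prems(1) by auto
  have IH: "lc X gen cs = lc X gen' cs" using Cons.IH[OF Cons.prems(1) o(1)] .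
  show ?case by (simp only: p lc_Cons m IH)
qed

lemma lc_map: "lc X (g \<circ> f) cs = lc X g (map (\<lambda>(c, w). (c, map f w)) cs)"
proof (induction cs)
  case Nil then show ?case by simp
next
  case (Cons p cs)
  obtain c w where p: "p = (c, w)" by force
  have "map (g \<circ> f) w = map g (map f w)" by simp
  then show ?case using Cons p by (simp only: list.map(2) lc_Cons prod.case)
qed

lemma okl_indep: "okl g G cs = okl g' G cs" by (simp add: okl_def)

lemma shf_strict: "strict_mono (shf k)" unfolding strict_mono_def shf_def by auto

lemma shf_comm: "i < j \<Longrightarrow> shf j (shf i N) = shf i (shf (j - 1) N)"
  unfolding shf_def by auto

locale part2 = fp B for B :: "'b alg" +
  fixes A :: "'d alg" and \<phi> and \<iota> :: "nat \<Rightarrow> 'b \<Rightarrow> 'd" and \<pi>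
  assumes ncA: "ncps A \<phi>"
    and iota_hom: "\<And>N. unital_hom B A (\<iota> N)"
    and pi_hom: "unital_hom (free_prod B) A \<pi>"
    and pi_emb: "\<And>N b. b \<in> alg_carrier B \<Longrightarrow> \<pi> (fp_emb B N b) = \<iota> N b"
begin

abbreviation "Gf n \<equiv> (\<Union>N\<in>{..n}. fp_emb B N ` alg_carrier B)"
abbreviation "Af n \<equiv> restr_alg F (subalg_gen F (Gf n))"
abbreviation "gen \<equiv> (\<lambda>(N, b). fp_emb B N b)"
abbreviation "Gi n \<equiv> {(N, b). N \<le> n \<and> b \<in> alg_carrier B}"

lemma uaA: "unital_algebra A" using ncA by (simp add: ncps_def)

lemma Gf_eq: "Gf n = gen ` Gi n" by auto

lemma Gf_c: "Gf n \<subseteq> alg_carrier F" using emb_c by auto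

lemma subF: "subalg F (subalg_gen F (Gf n))"
  using subalg_gen_subalg[OF ua.subalg_carrier[OF ua.intro[OF F_ua]] Gf_c] .

lemma Af_sub: "alg_carrier (Af n) \<subseteq> alg_carrier F"
  using subF by (simp add: subalg_def restr_alg_def)

lemma ua_Af: "unital_algebra (Af n)" using ua.ua_restr[OF ua.intro[OF F_ua] subF] .

lemma emb_Af: "N \<le> n \<Longrightarrow> b \<in> alg_carrier B \<Longrightarrow> fp_emb B N b \<in> alg_carrier (Af n)"
  using subalg_gen_base[of "Gf n" F] by (auto simp: restr_alg_def)

lemma gen_Af: "gen ` Gi n \<subseteq> alg_carrier (Af n)" using emb_Af by auto

lemma gen_Af_F: "gen ` Gi n \<subseteq> alg_carrier F" using emb_c by auto

lemma pi_mprod: "set (map snd ws) \<subseteq> alg_carrier B \<Longrightarrow>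
   \<pi> (mprod F (map gen ws)) = mprod A (map (\<lambda>(N, b). \<iota> N b) ws)"
proof -
  assume ws: "set (map snd ws) \<subseteq> alg_carrier B"
  have "set (map gen ws) \<subseteq> alg_carrier F" using ws emb_c by auto
  then have "\<pi> (mprod F (map gen ws)) = mprod A (map \<pi> (map gen ws))" using hom_mprod[OF pi_hom F_ua] by simp
  also have "map \<pi> (map gen ws) = map (\<lambda>(N, b). \<iota> N b) ws" using ws pi_emb by auto
  finally show ?thesis .
qed

lemma Af_ops: "alg_carrier (Af n) = subalg_gen F (Gf n)" "alg_add (Af n) = alg_add F"
  "alg_mult (Af n) = alg_mult F" "alg_smult (Af n) = alg_smult F" "alg_one (Af n) = alg_one F"
  "alg_zero (Af n) = alg_zero F"
  by (simp_all add: restr_alg_def)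

lemma phi_add: "u \<in> alg_carrier A \<Longrightarrow> v \<in> alg_carrier A \<Longrightarrow> \<phi> (alg_add A u v) = \<phi> u + \<phi> v"
  using ncA unfolding ncps_def by blast
lemma phi_sm: "u \<in> alg_carrier A \<Longrightarrow> \<phi> (alg_smult A c u) = c * \<phi> u"
  using ncA unfolding ncps_def by blast
lemma phi_one: "\<phi> (alg_one A) = 1"
  using ncA unfolding ncps_def by blast
lemma pi_c: "x \<in> alg_carrier F \<Longrightarrow> \<pi> x \<in> alg_carrier A"
  using pi_hom unfolding unital_hom_def by blast
lemma pi_add: "x \<in> alg_carrier F \<Longrightarrow> y \<in> alg_carrier F \<Longrightarrow> \<pi> (alg_add F x y) = alg_add A (\<pi> x) (\<pi> y)"
  using pi_hom unfolding unital_hom_def by blast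
lemma pi_sm: "x \<in> alg_carrier F \<Longrightarrow> \<pi> (alg_smult F c x) = alg_smult A c (\<pi> x)"
  using pi_hom unfolding unital_hom_def by blast
lemma pi_one: "\<pi> (alg_one F) = alg_one A"
  using pi_hom unfolding unital_hom_def by blast

lemma Phi_add: "x \<in> alg_carrier (Af n) \<Longrightarrow> y \<in> alg_carrier (Af n) \<Longrightarrow>
    (\<phi> \<circ> \<pi>) (alg_add (Af n) x y) = (\<phi> \<circ> \<pi>) x + (\<phi> \<circ> \<pi>) y"
proof -
  assume "x \<in> alg_carrier (Af n)" "y \<in> alg_carrier (Af n)"
  then have x: "x \<in> alg_carrier F" and y: "y \<in> alg_carrier F" using Af_sub by auto
  show ?thesis unfolding Af_ops comp_def pi_add[OF x y] using phi_add[OF pi_c[OF x] pi_c[OF y]] .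
qed

lemma Phi_sm: "x \<in> alg_carrier (Af n) \<Longrightarrow> (\<phi> \<circ> \<pi>) (alg_smult (Af n) c x) = c * (\<phi> \<circ> \<pi>) x"
proof -
  assume "x \<in> alg_carrier (Af n)"
  then have x: "x \<in> alg_carrier F" using Af_sub by auto
  show ?thesis unfolding Af_ops comp_def pi_sm[OF x] using phi_sm[OF pi_c[OF x]] .
qed

lemma ncps_Af: "ncps (Af n) (\<phi> \<circ> \<pi>)"
  unfolding ncps_def using ua_Af Phi_add Phi_sm phi_one pi_one
  by (simp only: Af_ops comp_apply) blast

lemma in_span: "x \<in> alg_carrier (Af n) \<Longrightarrow> \<exists>cs. okl gen (Gi n) cs \<and> x = lc F gen cs"
proof -
  assume x: "x \<in> alg_carrier (Af n)"
  have "subalg_gen F (gen ` Gi n) \<subseteq> ua.spanS F gen (Gi n)"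
    using ua.subalg_gen_in_span[OF ua.intro[OF F_ua] gen_Af_F] .
  moreover have "x \<in> subalg_gen F (gen ` Gi n)" using x Gf_eq by (simp add: restr_alg_def)
  ultimately have "x \<in> ua.spanS F gen (Gi n)" by blast
  then show ?thesis unfolding ua.spanS_def[OF ua.intro[OF F_ua]] by blast
qed


definition homs :: "(nat \<Rightarrow> nat \<Rightarrow> ((nat \<times> 'b) list \<Rightarrow> complex) set \<Rightarrow> ((nat \<times> 'b) list \<Rightarrow> complex) set) \<Rightarrow> bool" where
  "homs d \<longleftrightarrow> (\<forall>n k. 1 \<le> n \<longrightarrow> k \<le> n \<longrightarrow>
                     unital_hom (Af (n - 1)) (Af n) (d n k) \<and>
                     (\<forall>N b. N \<le> n - 1 \<longrightarrow> b \<in> alg_carrier B \<longrightarrow>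
                        d n k (fp_emb B N b) = fp_emb B (if N < k then N else N + 1) b))"

lemma b_to_a: assumes h: "homs d" and s: "sco Af (\<lambda>n. \<phi> \<circ> \<pi>) d"
  shows "spreadable B A \<phi> \<iota>"
  unfolding spreadable_def
proof (intro allI impI)
  fix i :: "nat \<Rightarrow> nat" and ws :: "(nat \<times> 'b) list"
  assume i: "strict_mono i" and ws: "set (map snd ws) \<subseteq> alg_carrier B"
  have mor: "\<And>n k. 1 \<le> n \<Longrightarrow> k \<le> n \<Longrightarrow> ncps_mor (Af (n-1)) (\<phi> \<circ> \<pi>) (Af n) (\<phi> \<circ> \<pi>) (d n k)"
    using s unfolding sco_def by blast
  have gd: "\<And>n k N b. 1 \<le> n \<Longrightarrow> k \<le> n \<Longrightarrow> N \<le> n-1 \<Longrightarrow> b \<in> alg_carrier B \<Longrightarrow>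
        d n k (fp_emb B N b) = fp_emb B (if N < k then N else N+1) b"
    using h unfolding homs_def by blast
  have gc: "\<And>n N b. N \<le> n \<Longrightarrow> b \<in> alg_carrier B \<Longrightarrow> fp_emb B N b \<in> alg_carrier (Af n)"
    using emb_Af by blast
  have amb: "\<And>n ws. set (map snd ws) \<subseteq> alg_carrier B \<Longrightarrow> (\<forall>p\<in>set ws. fst p \<le> n) \<Longrightarrow>
        \<phi> (mprod A (map (\<lambda>(N, b). \<iota> N b) ws)) = (\<phi> \<circ> \<pi>) (mprod (Af n) (map (\<lambda>(N, b). fp_emb B N b) ws))"
    using pi_mprod by simp
  show "\<phi> (mprod A (map (\<lambda>(N, b). \<iota> N b) ws)) = \<phi> (mprod A (map (\<lambda>(N, b). \<iota> (i N) b) ws))"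
    using spread_final[where C=Af and \<psi>="\<lambda>n. \<phi> \<circ> \<pi>" and d=d and g="\<lambda>n N b. fp_emb B N b"
        and S="alg_carrier B" and \<iota>=\<iota> and \<Phi>="\<lambda>xs. \<phi> (mprod A xs)", OF mor gd gc amb i ws] by simp
qed

abbreviation "Ai n \<equiv> restr_alg A (subalg_gen A (\<Union>N\<in>{..n}. \<iota> N ` alg_carrier B))"

lemma c_to_a: assumes gd: "\<forall>n k. 1 \<le> n \<longrightarrow> k \<le> n \<longrightarrow>
                        (\<forall>N b. N \<le> n - 1 \<longrightarrow> b \<in> alg_carrier B \<longrightarrow>
                           d n k (\<iota> N b) = \<iota> (if N < k then N else N + 1) b)"
   and s: "sco Ai (\<lambda>n. \<phi>) d"
  shows "spreadable B A \<phi> \<iota>"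
  unfolding spreadable_def
proof (intro allI impI)
  fix i :: "nat \<Rightarrow> nat" and ws :: "(nat \<times> 'b) list"
  assume i: "strict_mono i" and ws: "set (map snd ws) \<subseteq> alg_carrier B"
  have mor: "\<And>n k. 1 \<le> n \<Longrightarrow> k \<le> n \<Longrightarrow> ncps_mor (Ai (n-1)) \<phi> (Ai n) \<phi> (d n k)"
    using s unfolding sco_def by blast
  have gd': "\<And>n k N b. 1 \<le> n \<Longrightarrow> k \<le> n \<Longrightarrow> N \<le> n-1 \<Longrightarrow> b \<in> alg_carrier B \<Longrightarrow>
        d n k (\<iota> N b) = \<iota> (if N < k then N else N+1) b"
    using gd by blast
  have gc: "\<And>n N b. N \<le> n \<Longrightarrow> b \<in> alg_carrier B \<Longrightarrow> \<iota> N b \<in> alg_carrier (Ai n)"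
  proof -
    fix n N :: nat and b assume "N \<le> n" "b \<in> alg_carrier B"
    then have "\<iota> N b \<in> (\<Union>N\<in>{..n}. \<iota> N ` alg_carrier B)" by blast
    then show "\<iota> N b \<in> alg_carrier (Ai n)" using subalg_gen_base by (force simp: restr_alg_def)
  qed
  have amb: "\<And>n ws. set (map snd ws) \<subseteq> alg_carrier B \<Longrightarrow> (\<forall>p\<in>set ws. fst p \<le> n) \<Longrightarrow>
        \<phi> (mprod A (map (\<lambda>(N, b). \<iota> N b) ws)) = \<phi> (mprod (Ai n) (map (\<lambda>(N, b). \<iota> N b) ws))"
    by simp
  show "\<phi> (mprod A (map (\<lambda>(N, b). \<iota> N b) ws)) = \<phi> (mprod A (map (\<lambda>(N, b). \<iota> (i N) b) ws))"
    using spread_final[where C=Ai and \<psi>="\<lambda>n. \<phi>" and d=d and g="\<lambda>n N b. \<iota> N b"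
        and S="alg_carrier B" and \<iota>=\<iota> and \<Phi>="\<lambda>xs. \<phi> (mprod A xs)", OF mor gd' gc amb i ws] by simp
qed


lemma shf_eq: "(if N < k then N else N + 1) = shf k N" by (simp add: shf_def)

lemma sig_maps: assumes n: "1 \<le> n" and x: "x \<in> subalg_gen F (Gf (n - 1))"
  shows "sig k x \<in> subalg_gen F (Gf n)"
proof -
  let ?T = "subalg_gen F (Gf n)"
  let ?P = "{X \<in> alg_carrier F. sig k X \<in> ?T}"
  have S: "subalg F ?T" using subF .
  have Tz: "alg_zero F \<in> ?T" and To: "alg_one F \<in> ?T"
    and Ta: "\<And>u v. u \<in> ?T \<Longrightarrow> v \<in> ?T \<Longrightarrow> alg_add F u v \<in> ?T"
    and Tm: "\<And>u v. u \<in> ?T \<Longrightarrow> v \<in> ?T \<Longrightarrow> alg_mult F u v \<in> ?T"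
    and Ts: "\<And>u c. u \<in> ?T \<Longrightarrow> alg_smult F c u \<in> ?T"
    using S unfolding subalg_def by blast+
  note sh = sig_hom[of k]
  have s0: "sig k (alg_zero F) = alg_zero F" using hom_zero[OF sh F_ua F_ua] .
  have s1: "sig k (alg_one F) = alg_one F" using sh unfolding unital_hom_def by blast
  have sa: "\<And>u v. u \<in> alg_carrier F \<Longrightarrow> v \<in> alg_carrier F \<Longrightarrow> sig k (alg_add F u v) = alg_add F (sig k u) (sig k v)"
    using sh unfolding unital_hom_def by blast
  have sm: "\<And>u v. u \<in> alg_carrier F \<Longrightarrow> v \<in> alg_carrier F \<Longrightarrow> sig k (alg_mult F u v) = alg_mult F (sig k u) (sig k v)"
    using sh unfolding unital_hom_def by blast
  have ss: "\<And>u c. u \<in> alg_carrier F \<Longrightarrow> sig k (alg_smult F c u) = alg_smult F c (sig k u)"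
    using sh unfolding unital_hom_def by blast
  have uF: "ua F" using F_ua by (rule ua.intro)
  have "subalg F ?P" unfolding subalg_def
  proof (intro conjI ballI allI)
    show "?P \<subseteq> alg_carrier F" by blast
    show "alg_zero F \<in> ?P" using s0 Tz ua.zero_c[OF uF] by simp
    show "alg_one F \<in> ?P" using s1 To ua.one_c[OF uF] by simp
  next
    fix X Y assume X: "X \<in> ?P" and Y: "Y \<in> ?P"
    then have XF: "X \<in> alg_carrier F" and YF: "Y \<in> alg_carrier F" and XT: "sig k X \<in> ?T" and YT: "sig k Y \<in> ?T"
      by blast+
    show "alg_add F X Y \<in> ?P" using sa[OF XF YF] Ta[OF XT YT] ua.add_c[OF uF XF YF] by simp
    show "alg_mult F X Y \<in> ?P" using sm[OF XF YF] Tm[OF XT YT] ua.mult_c[OF uF XF YF] by simp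
  next
    fix c X assume X: "X \<in> ?P"
    then have XF: "X \<in> alg_carrier F" and XT: "sig k X \<in> ?T" by blast+
    show "alg_smult F c X \<in> ?P" using ss[OF XF] Ts[OF XT] ua.smult_c[OF uF XF] by simp
  qed
  moreover have "Gf (n - 1) \<subseteq> ?P"
  proof
    fix X assume "X \<in> Gf (n - 1)"
    then obtain N b where Nb: "N \<le> n - 1" "b \<in> alg_carrier B" "X = fp_emb B N b" by blast
    have "shf k N \<le> n" using Nb n by (cases "N < k") (simp_all add: shf_def)
    then have "fp_emb B (shf k N) b \<in> Gf n" using Nb(2) by blast
    then have "sig k X \<in> Gf n" using Nb sig_emb by simp
    moreover have "Gf n \<subseteq> ?T" by (rule subalg_gen_base)
    ultimately have "sig k X \<in> ?T" by (rule subsetD[rotated])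
    moreover have "X \<in> alg_carrier F" using Nb emb_c by simp
    ultimately show "X \<in> ?P" by simp
  qed
  ultimately have "subalg_gen F (Gf (n - 1)) \<subseteq> ?P" by (rule subalg_gen_sub)
  then show ?thesis using x by blast
qed

lemma homs_sig: "homs (\<lambda>n k. sig k)"
  unfolding homs_def
proof (intro allI impI conjI)
  fix n k :: nat assume n: "1 \<le> n" and k: "k \<le> n"
  show "unital_hom (Af (n - 1)) (Af n) (sig k)"
    unfolding unital_hom_def Af_ops
  proof (intro conjI ballI allI)
    fix x assume x: "x \<in> subalg_gen F (Gf (n - 1))"
    show "sig k x \<in> subalg_gen F (Gf n)" using sig_maps[OF n x] .
    have xF: "x \<in> alg_carrier F" using Af_sub[of "n-1"] x unfolding Af_ops by blast
    fix c show "sig k (alg_smult F c x) = alg_smult F c (sig k x)" using sig_hom xF by (simp add: unital_hom_def)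
    fix y assume y: "y \<in> subalg_gen F (Gf (n - 1))"
    have yF: "y \<in> alg_carrier F" using Af_sub[of "n-1"] y unfolding Af_ops by blast
    show "sig k (alg_add F x y) = alg_add F (sig k x) (sig k y)" using sig_hom xF yF by (simp add: unital_hom_def)
    show "sig k (alg_mult F x y) = alg_mult F (sig k x) (sig k y)" using sig_hom xF yF by (simp add: unital_hom_def)
  next
    show "sig k (alg_one F) = alg_one F" using sig_hom by (simp add: unital_hom_def)
  qed
  fix N b assume "N \<le> n - 1" "b \<in> alg_carrier B"
  then show "sig k (fp_emb B N b) = fp_emb B (if N < k then N else N + 1) b"
    using sig_emb shf_eq by simp
qed


lemma homs_hom: "homs d \<Longrightarrow> 1 \<le> n \<Longrightarrow> k \<le> n \<Longrightarrow> unital_hom (Af (n - 1)) (Af n) (d n k)"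
  unfolding homs_def by blast

lemma homs_gen: "homs d \<Longrightarrow> 1 \<le> n \<Longrightarrow> k \<le> n \<Longrightarrow> N \<le> n - 1 \<Longrightarrow> b \<in> alg_carrier B \<Longrightarrow>
   d n k (fp_emb B N b) = fp_emb B (shf k N) b"
  unfolding homs_def shf_eq by blast

lemma Phi_lc: "okl gen (Gi n) cs \<Longrightarrow> (\<phi> \<circ> \<pi>) (lc F gen cs)
   = sum_list (map (\<lambda>(c, w). c * \<phi> (mprod A (map (\<lambda>(N, b). \<iota> N b) w))) cs)"
proof -
  assume o: "okl gen (Gi n) cs"
  have "(\<phi> \<circ> \<pi>) (lc (Af n) gen cs) = sum_list (map (\<lambda>(c, w). c * (\<phi> \<circ> \<pi>) (mprod (Af n) (map gen w))) cs)"
    using lin_lc[OF ua_Af gen_Af, where \<Phi>="\<phi> \<circ> \<pi>" and cs=cs] Phi_add Phi_sm o by blast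
  also have "\<dots> = sum_list (map (\<lambda>(c, w). c * \<phi> (mprod A (map (\<lambda>(N, b). \<iota> N b) w))) cs)"
  proof (rule arg_cong[where f=sum_list], rule map_cong[OF refl])
    fix p assume p: "p \<in> set cs"
    obtain c w where cw: "p = (c, w)" by force
    have "set (snd p) \<subseteq> Gi n" using o p unfolding okl_def by blast
    then have "set w \<subseteq> Gi n" using cw by simp
    then have "set (map snd w) \<subseteq> alg_carrier B" by auto
    then show "(case p of (c, w) \<Rightarrow> c * (\<phi> \<circ> \<pi>) (mprod (Af n) (map gen w)))
        = (case p of (c, w) \<Rightarrow> c * \<phi> (mprod A (map (\<lambda>(N, b). \<iota> N b) w)))"
      using cw pi_mprod by simp
  qed
  finally show ?thesis by simp
qed

lemma a_to_mor: assumes sp: "spreadable B A \<phi> \<iota>" and h: "homs d" and n: "1 \<le> n" and k: "k \<le> n"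
  and x: "x \<in> alg_carrier (Af (n - 1))"
  shows "(\<phi> \<circ> \<pi>) (d n k x) = (\<phi> \<circ> \<pi>) x"
proof -
  obtain cs where o: "okl gen (Gi (n - 1)) cs" and xe: "x = lc F gen cs" using in_span[OF x] by blast
  have H: "unital_hom (Af (n - 1)) (Af n) (d n k)" using homs_hom[OF h n k] .
  let ?sp = "\<lambda>(N, b). (shf k N, b)"
  have dx: "d n k x = lc F gen (map (\<lambda>(c, w). (c, map ?sp w)) cs)"
  proof -
    have "d n k x = lc (Af n) (d n k \<circ> gen) cs"
      using hom_lc[OF H ua_Af ua_Af gen_Af o] xe by simp
    also have "\<dots> = lc F (d n k \<circ> gen) cs" by simp
    also have "\<dots> = lc F (gen \<circ> ?sp) cs"
    proof (rule lc_cong[OF _ o])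
      fix a assume "a \<in> Gi (n - 1)"
      then obtain N b where "a = (N, b)" "N \<le> n - 1" "b \<in> alg_carrier B" by blast
      then show "(d n k \<circ> gen) a = (gen \<circ> ?sp) a" using homs_gen[OF h n k] by simp
    qed
    also have "\<dots> = lc F gen (map (\<lambda>(c, w). (c, map ?sp w)) cs)"
      by (rule lc_map)
    finally show ?thesis .
  qed
  have o2: "okl gen (Gi n) (map (\<lambda>(c, w). (c, map ?sp w)) cs)"
    unfolding okl_def
  proof
    fix p assume "p \<in> set (map (\<lambda>(c, w). (c, map ?sp w)) cs)"
    then obtain q where q: "q \<in> set cs" "p = (\<lambda>(c, w). (c, map ?sp w)) q" by auto
    obtain c w where cw: "q = (c, w)" by force
    have "set (snd q) \<subseteq> Gi (n - 1)" using o q(1) unfolding okl_def by blast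
    then have w: "set w \<subseteq> Gi (n - 1)" using cw by simp
    show "set (snd p) \<subseteq> Gi n"
    proof
      fix a assume "a \<in> set (snd p)"
      then have "a \<in> ?sp ` set w" using q(2) cw by simp
      then obtain N b where "(N, b) \<in> set w" "a = (shf k N, b)" by auto
      moreover then have "N \<le> n - 1" "b \<in> alg_carrier B" using w by auto
      moreover have "shf k N \<le> n" using calculation n by (cases "N < k") (simp_all add: shf_def)
      ultimately show "a \<in> Gi n" by simp
    qed
  qed
  have o1: "okl gen (Gi n) cs" unfolding okl_def
  proof
    fix p assume "p \<in> set cs"
    then have "set (snd p) \<subseteq> Gi (n - 1)" using o unfolding okl_def by blast
    moreover have "Gi (n - 1) \<subseteq> Gi n" by auto
    ultimately show "set (snd p) \<subseteq> Gi n" by blast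
  qed
  have "(\<phi> \<circ> \<pi>) (d n k x) = sum_list (map (\<lambda>(c, w). c * \<phi> (mprod A (map (\<lambda>(N, b). \<iota> N b) w)))
        (map (\<lambda>(c, w). (c, map ?sp w)) cs))"
    unfolding dx using Phi_lc[OF o2] .
  also have "\<dots> = sum_list (map (\<lambda>(c, w). c * \<phi> (mprod A (map (\<lambda>(N, b). \<iota> N b) w))) cs)"
  proof -
    have "\<And>w. set (map snd w) \<subseteq> alg_carrier B \<Longrightarrow> \<phi> (mprod A (map (\<lambda>(N, b). \<iota> N b) (map ?sp w)))
        = \<phi> (mprod A (map (\<lambda>(N, b). \<iota> N b) w))"
    proof -
      fix w :: "(nat \<times> 'b) list" assume w: "set (map snd w) \<subseteq> alg_carrier B"
      have "map (\<lambda>(N, b). \<iota> N b) (map ?sp w) = map (\<lambda>(N, b). \<iota> (shf k N) b) w" by auto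
      then show "\<phi> (mprod A (map (\<lambda>(N, b). \<iota> N b) (map ?sp w))) = \<phi> (mprod A (map (\<lambda>(N, b). \<iota> N b) w))"
        using sp shf_strict[of k] w unfolding spreadable_def by metis
    qed
    note X = this
    have Y: "\<And>p. p \<in> set cs \<Longrightarrow> ((\<lambda>(c, w). c * \<phi> (mprod A (map (\<lambda>(N, b). \<iota> N b) w))) \<circ> (\<lambda>(c, w). (c, map ?sp w))) p
          = (\<lambda>(c, w). c * \<phi> (mprod A (map (\<lambda>(N, b). \<iota> N b) w))) p"
    proof -
      fix p assume p: "p \<in> set cs"
      obtain c w where cw: "p = (c, w)" by force
      have "set (snd p) \<subseteq> Gi (n - 1)" using o p unfolding okl_def by blast
      then have "set (map snd w) \<subseteq> alg_carrier B" using cw by auto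
      then show "((\<lambda>(c, w). c * \<phi> (mprod A (map (\<lambda>(N, b). \<iota> N b) w))) \<circ> (\<lambda>(c, w). (c, map ?sp w))) p
          = (\<lambda>(c, w). c * \<phi> (mprod A (map (\<lambda>(N, b). \<iota> N b) w))) p"
        using X cw by simp
    qed
    show ?thesis unfolding map_map by (rule arg_cong[where f=sum_list], rule map_cong[OF refl Y])
  qed
  also have "\<dots> = (\<phi> \<circ> \<pi>) x" unfolding xe using Phi_lc[OF o1] by simp
  finally show ?thesis .
qed


lemma shf_le: "1 \<le> n \<Longrightarrow> N \<le> n - 1 \<Longrightarrow> shf k N \<le> n"
  by (cases "N < k") (simp_all add: shf_def)

lemma ident: assumes h: "homs d" and n: "1 \<le> n" and ij: "i < j" "j \<le> n + 1"
  and x: "x \<in> alg_carrier (Af (n - 1))"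
  shows "d (n + 1) j (d n i x) = d (n + 1) i (d n (j - 1) x)"
proof -
  obtain cs where o: "okl gen (Gi (n - 1)) cs" and xe: "x = lc F gen cs" using in_span[OF x] by blast
  have n1: "1 \<le> n + 1" by simp
  have Hi: "unital_hom (Af (n - 1)) (Af n) (d n i)" using homs_hom[OF h n] ij by simp
  have Hj1: "unital_hom (Af (n - 1)) (Af n) (d n (j - 1))" using homs_hom[OF h n] ij by simp
  have Hj: "unital_hom (Af n) (Af (n + 1)) (d (n + 1) j)" using homs_hom[OF h n1, of j] ij by simp
  have Hi': "unital_hom (Af n) (Af (n + 1)) (d (n + 1) i)" using homs_hom[OF h n1, of i] ij by simp
  have H1: "unital_hom (Af (n - 1)) (Af (n + 1)) (d (n + 1) j \<circ> d n i)" using uhom_comp[OF Hi Hj] .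
  have H2: "unital_hom (Af (n - 1)) (Af (n + 1)) (d (n + 1) i \<circ> d n (j - 1))" using uhom_comp[OF Hj1 Hi'] .
  have "(d (n + 1) j \<circ> d n i) x = lc (Af (n + 1)) ((d (n + 1) j \<circ> d n i) \<circ> gen) cs"
    using hom_lc[OF H1 ua_Af ua_Af gen_Af o] xe by simp
  also have "\<dots> = lc (Af (n + 1)) ((d (n + 1) i \<circ> d n (j - 1)) \<circ> gen) cs"
  proof (rule lc_cong[OF _ o])
    fix a assume "a \<in> Gi (n - 1)"
    then obtain N b where a: "a = (N, b)" "N \<le> n - 1" "b \<in> alg_carrier B" by blast
    have e1: "d n i (fp_emb B N b) = fp_emb B (shf i N) b" using homs_gen[OF h n _ a(2,3)] ij by simp
    have e2: "d n (j - 1) (fp_emb B N b) = fp_emb B (shf (j - 1) N) b" using homs_gen[OF h n _ a(2,3)] ij by simp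
    have b1: "shf i N \<le> (n + 1) - 1" "shf (j - 1) N \<le> (n + 1) - 1" using shf_le[OF n a(2)] by simp_all
    have e3: "d (n + 1) j (fp_emb B (shf i N) b) = fp_emb B (shf j (shf i N)) b"
      using homs_gen[OF h n1 _ b1(1) a(3)] ij by simp
    have e4: "d (n + 1) i (fp_emb B (shf (j - 1) N) b) = fp_emb B (shf i (shf (j - 1) N)) b"
      using homs_gen[OF h n1 _ b1(2) a(3)] ij by simp
    show "((d (n + 1) j \<circ> d n i) \<circ> gen) a = ((d (n + 1) i \<circ> d n (j - 1)) \<circ> gen) a"
      using a(1) e1 e2 e3 e4 shf_comm[OF ij(1)] by simp
  qed
  also have "\<dots> = (d (n + 1) i \<circ> d n (j - 1)) x"
    using hom_lc[OF H2 ua_Af ua_Af gen_Af o] xe by simp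
  finally show ?thesis by simp
qed

lemma a_to_sco: assumes sp: "spreadable B A \<phi> \<iota>" and h: "homs d"
  shows "sco Af (\<lambda>n. \<phi> \<circ> \<pi>) d"
  unfolding sco_def
proof (intro conjI allI impI)
  fix n show "ncps (Af n) (\<phi> \<circ> \<pi>)" using ncps_Af .
next
  fix n k :: nat assume n: "1 \<le> n" and k: "k \<le> n"
  show "ncps_mor (Af (n - 1)) (\<phi> \<circ> \<pi>) (Af n) (\<phi> \<circ> \<pi>) (d n k)"
    unfolding ncps_mor_def using ncps_Af homs_hom[OF h n k] a_to_mor[OF sp h n k] by blast
next
  fix n i j :: nat assume "1 \<le> n" "i < j" "j \<le> n + 1"
  then show "\<forall>x\<in>alg_carrier (Af (n - 1)). d (n + 1) j (d n i x) = d (n + 1) i (d n (j - 1) x)"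
    using ident[OF h] by blast
qed

end


theorem mainTheorem5:
  shows
  "(\<forall>(A :: nat \<Rightarrow> 'a alg) \<phi> \<delta> (L :: 'c alg) \<psi> \<mu> \<alpha>0.
      sco A \<phi> \<delta> \<longrightarrow>
      is_inductive_limit A \<phi> \<delta> L \<psi> \<mu> \<longrightarrow>
      ncps_mor L \<psi> L \<psi> \<alpha>0 \<longrightarrow>
      (\<forall>n. 1 \<le> n \<longrightarrow> (\<forall>x\<in>alg_carrier (A (n - 1)). \<alpha>0 (\<mu> (n - 1) x) = \<mu> n (\<delta> n 0 x))) \<longrightarrow>
      spreadable (A 0) L \<psi> (\<lambda>N. (\<alpha>0 ^^ N) \<circ> \<mu> 0))
   \<and>
   (\<forall>(B :: 'b alg) (A :: 'd alg) \<phi> \<iota> \<pi>.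
      unital_algebra B \<longrightarrow>
      ncps A \<phi> \<longrightarrow>
      (\<forall>N. unital_hom B A (\<iota> N)) \<longrightarrow>
      unital_hom (free_prod B) A \<pi> \<longrightarrow>
      (\<forall>N. \<forall>b\<in>alg_carrier B. \<pi> (fp_emb B N b) = \<iota> N b) \<longrightarrow>
      (let
         Af = (\<lambda>n. restr_alg (free_prod B)
                 (subalg_gen (free_prod B) (\<Union>N\<in>{..n}. fp_emb B N ` alg_carrier B)));
         \<phi>f = (\<lambda>n. \<phi> \<circ> \<pi>);
         An = (\<lambda>n. restr_alg A (subalg_gen A (\<Union>N\<in>{..n}. \<iota> N ` alg_carrier B)));
         \<phi>n = (\<lambda>n. \<phi>);
         sh = (\<lambda>k N :: nat. if N < k then N else N + 1);
         cond_a = spreadable B A \<phi> \<iota>;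
         homs_f = (\<lambda>d. \<forall>n k. 1 \<le> n \<longrightarrow> k \<le> n \<longrightarrow>
                     unital_hom (Af (n - 1)) (Af n) (d n k) \<and>
                     (\<forall>N b. N \<le> n - 1 \<longrightarrow> b \<in> alg_carrier B \<longrightarrow>
                        d n k (fp_emb B N b) = fp_emb B (sh k N) b));
         cond_b = ((\<exists>d. homs_f d) \<and> (\<forall>d. homs_f d \<longrightarrow> sco Af \<phi>f d));
         cond_c = (\<exists>d. (\<forall>n k. 1 \<le> n \<longrightarrow> k \<le> n \<longrightarrow>
                        (\<forall>N b. N \<le> n - 1 \<longrightarrow> b \<in> alg_carrier B \<longrightarrow>
                           d n k (\<iota> N b) = \<iota> (sh k N) b)) \<and>
                       sco An \<phi>n d)
       in (cond_a \<longleftrightarrow> cond_b) \<and> (cond_c \<longrightarrow> cond_a)))"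
proof (rule conjI)
  show "\<forall>(A :: nat \<Rightarrow> 'a alg) \<phi> \<delta> (L :: 'c alg) \<psi> \<mu> \<alpha>0.
      sco A \<phi> \<delta> \<longrightarrow>
      is_inductive_limit A \<phi> \<delta> L \<psi> \<mu> \<longrightarrow>
      ncps_mor L \<psi> L \<psi> \<alpha>0 \<longrightarrow>
      (\<forall>n. 1 \<le> n \<longrightarrow> (\<forall>x\<in>alg_carrier (A (n - 1)). \<alpha>0 (\<mu> (n - 1) x) = \<mu> n (\<delta> n 0 x))) \<longrightarrow>
      spreadable (A 0) L \<psi> (\<lambda>N. (\<alpha>0 ^^ N) \<circ> \<mu> 0)"
  proof (intro allI impI)
    fix A :: "nat \<Rightarrow> 'a alg" and \<phi> \<delta> and L :: "'c alg" and \<psi> \<mu> \<alpha>0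
    assume "sco A \<phi> \<delta>" "is_inductive_limit A \<phi> \<delta> L \<psi> \<mu>" "ncps_mor L \<psi> L \<psi> \<alpha>0"
      "\<forall>n. 1 \<le> n \<longrightarrow> (\<forall>x\<in>alg_carrier (A (n - 1)). \<alpha>0 (\<mu> (n - 1) x) = \<mu> n (\<delta> n 0 x))"
    then show "spreadable (A 0) L \<psi> (\<lambda>N. (\<alpha>0 ^^ N) \<circ> \<mu> 0)"
      by (intro part1.part1_spread part1.intro)
  qed
next
  show "\<forall>(B :: 'b alg) (A :: 'd alg) \<phi> \<iota> \<pi>.
      unital_algebra B \<longrightarrow>
      ncps A \<phi> \<longrightarrow>
      (\<forall>N. unital_hom B A (\<iota> N)) \<longrightarrow>
      unital_hom (free_prod B) A \<pi> \<longrightarrow>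
      (\<forall>N. \<forall>b\<in>alg_carrier B. \<pi> (fp_emb B N b) = \<iota> N b) \<longrightarrow>
      (let
         Af = (\<lambda>n. restr_alg (free_prod B)
                 (subalg_gen (free_prod B) (\<Union>N\<in>{..n}. fp_emb B N ` alg_carrier B)));
         \<phi>f = (\<lambda>n. \<phi> \<circ> \<pi>);
         An = (\<lambda>n. restr_alg A (subalg_gen A (\<Union>N\<in>{..n}. \<iota> N ` alg_carrier B)));
         \<phi>n = (\<lambda>n. \<phi>);
         sh = (\<lambda>k N :: nat. if N < k then N else N + 1);
         cond_a = spreadable B A \<phi> \<iota>;
         homs_f = (\<lambda>d. \<forall>n k. 1 \<le> n \<longrightarrow> k \<le> n \<longrightarrow>
                     unital_hom (Af (n - 1)) (Af n) (d n k) \<and>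
                     (\<forall>N b. N \<le> n - 1 \<longrightarrow> b \<in> alg_carrier B \<longrightarrow>
                        d n k (fp_emb B N b) = fp_emb B (sh k N) b));
         cond_b = ((\<exists>d. homs_f d) \<and> (\<forall>d. homs_f d \<longrightarrow> sco Af \<phi>f d));
         cond_c = (\<exists>d. (\<forall>n k. 1 \<le> n \<longrightarrow> k \<le> n \<longrightarrow>
                        (\<forall>N b. N \<le> n - 1 \<longrightarrow> b \<in> alg_carrier B \<longrightarrow>
                           d n k (\<iota> N b) = \<iota> (sh k N) b)) \<and>
                       sco An \<phi>n d)
       in (cond_a \<longleftrightarrow> cond_b) \<and> (cond_c \<longrightarrow> cond_a))"
  proof (intro allI impI)
    fix B :: "'b alg" and A :: "'d alg" and \<phi> \<iota> \<pi>
    assume uB: "unital_algebra B" and nA: "ncps A \<phi>" and hi: "\<forall>N. unital_hom B A (\<iota> N)"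
      and hp: "unital_hom (free_prod B) A \<pi>" and ep: "\<forall>N. \<forall>b\<in>alg_carrier B. \<pi> (fp_emb B N b) = \<iota> N b"
    interpret P: part2 B A \<phi> \<iota> \<pi>
      using uB nA hi hp ep by (intro part2.intro fp.intro part2_axioms.intro) auto
    have ab: "spreadable B A \<phi> \<iota> \<Longrightarrow> (\<exists>d. P.homs d) \<and> (\<forall>d. P.homs d \<longrightarrow> sco P.Af (\<lambda>n. \<phi> \<circ> \<pi>) d)"
      using P.homs_sig P.a_to_sco by blast
    have ba: "(\<exists>d. P.homs d) \<and> (\<forall>d. P.homs d \<longrightarrow> sco P.Af (\<lambda>n. \<phi> \<circ> \<pi>) d) \<Longrightarrow> spreadable B A \<phi> \<iota>"
      using P.b_to_a by blast
    have ca: "\<And>d. (\<forall>n k. 1 \<le> n \<longrightarrow> k \<le> n \<longrightarrow>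
                        (\<forall>N b. N \<le> n - 1 \<longrightarrow> b \<in> alg_carrier B \<longrightarrow>
                           d n k (\<iota> N b) = \<iota> (if N < k then N else N + 1) b)) \<Longrightarrow>
                       sco P.Ai (\<lambda>n. \<phi>) d \<Longrightarrow> spreadable B A \<phi> \<iota>"
      using P.c_to_a by blast
    show "let
         Af = (\<lambda>n. restr_alg (free_prod B)
                 (subalg_gen (free_prod B) (\<Union>N\<in>{..n}. fp_emb B N ` alg_carrier B)));
         \<phi>f = (\<lambda>n. \<phi> \<circ> \<pi>);
         An = (\<lambda>n. restr_alg A (subalg_gen A (\<Union>N\<in>{..n}. \<iota> N ` alg_carrier B)));
         \<phi>n = (\<lambda>n. \<phi>);
         sh = (\<lambda>k N :: nat. if N < k then N else N + 1);
         cond_a = spreadable B A \<phi> \<iota>;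
         homs_f = (\<lambda>d. \<forall>n k. 1 \<le> n \<longrightarrow> k \<le> n \<longrightarrow>
                     unital_hom (Af (n - 1)) (Af n) (d n k) \<and>
                     (\<forall>N b. N \<le> n - 1 \<longrightarrow> b \<in> alg_carrier B \<longrightarrow>
                        d n k (fp_emb B N b) = fp_emb B (sh k N) b));
         cond_b = ((\<exists>d. homs_f d) \<and> (\<forall>d. homs_f d \<longrightarrow> sco Af \<phi>f d));
         cond_c = (\<exists>d. (\<forall>n k. 1 \<le> n \<longrightarrow> k \<le> n \<longrightarrow>
                        (\<forall>N b. N \<le> n - 1 \<longrightarrow> b \<in> alg_carrier B \<longrightarrow>
                           d n k (\<iota> N b) = \<iota> (sh k N) b)) \<and>
                       sco An \<phi>n d)
       in (cond_a \<longleftrightarrow> cond_b) \<and> (cond_c \<longrightarrow> cond_a)"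
      unfolding Let_def P.homs_def[symmetric]
    proof (rule conjI)
      show "spreadable B A \<phi> \<iota> \<longleftrightarrow> (\<exists>d. P.homs d) \<and> (\<forall>d. P.homs d \<longrightarrow> sco P.Af (\<lambda>n. \<phi> \<circ> \<pi>) d)"
        using ab ba by (rule iffI)
    next
      show "(\<exists>d. (\<forall>n k. 1 \<le> n \<longrightarrow> k \<le> n \<longrightarrow>
                        (\<forall>N b. N \<le> n - 1 \<longrightarrow> b \<in> alg_carrier B \<longrightarrow>
                           d n k (\<iota> N b) = \<iota> (if N < k then N else N + 1) b)) \<and>
                       sco P.Ai (\<lambda>n. \<phi>) d) \<longrightarrow> spreadable B A \<phi> \<iota>"
        using ca by blast
    qed
  qed
qed


end
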